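(* Let $\mathcal{X}$ and $\Theta$ (with metric $d_\Theta$) be compact metric spaces, let $\mu:\mathcal{X}\times\Theta\to\mathbb{R}$ be continuous, and let $f_\theta:\mathcal{X}\to\mathbb{R}^p$, $\theta\in\Theta$, be functions such that for each $\theta$ the image $f_\theta(\mathcal{X})$ spans $\mathbb{R}^p$ and $(x,\theta)\mapsto f_\theta(x)$ is continuous on $\mathcal{X}\times\Theta$. Assume saturated identifiability: whenever $z_1,\ldots,z_p\in\mathcal{X}$ are pairwise distinct and $\theta,\theta'\in\Theta$ satisfy $\mu(z_j,\theta)=\mu(z_j,\theta')$ for $1\le j\le p$, then $\theta=\theta'$. Consider random variables $X_i$ ($\mathcal{X}$-valued) and $Y_i$ (real), $i\in\mathbb{N}$, on a probability space $(\Omega,\mathcal{F},\mathbb{P}_{\bar\theta})$, with $\bar\theta\in\Theta$ the true parameter, generated by the adaptive Wynn algorithm: $X_1,\ldots,X_{n_{\rm st}}$ are fixed points $x_1,\ldots,x_{n_{\rm st}}$ such that $M(\xi_{n_{\rm st}},\theta)$ is positive definite for all $\theta\in\Theta$; for $n\ge n_{\rm st}$, $\hat\theta_n=\hat\theta_n(X_1,Y_1,\ldots,X_n,Y_n)\in\Theta$ is an arbitrary (adaptive) estimator, and $$X_{n+1}\in\arg\max_{x\in\mathcal{X}} f_{\hat\theta_n}^{\mathsf T}(x)\,M^{-1}(\xi_n,\hat\theta_n)\,f_{\hat\theta_n}(x),\qquad \xi_n=\tfrac1n\sum_{i=1}^n\delta_{X_i}.$$ Assume further: (A1) there is a nondecreasing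 sequence of sub-$\sigma$-fields $\mathcal{F}_0\subseteq\mathcal{F}_1\subseteq\cdots\subseteq\mathcal{F}$ such that $X_i$ is $\mathcal{F}_{i-1}$-measurable and $Y_i$ is $\mathcal{F}_i$-measurable for each $i\in\mathbb{N}$; (A2) $Y_i=\mu(X_i,\bar\theta)+e_i$ with real square-integrable errors $e_i$ satisfying $\mathrm{E}(e_i\mid\mathcal{F}_{i-1})=0$ a.s. for all $i$ and $\sup_{i\in\mathbb{N}}\mathrm{E}(e_i^2\mid\mathcal{F}_{i-1})<\infty$ a.s. Then, irrespective of the adaptive estimators $\hat\theta_n$ employed in the algorithm, the adaptive least squares estimators $$\hat\theta_n^{(\mathrm{LS})}\in\arg\min_{\theta\in\Theta}\sum_{i=1}^n\bigl(Y_i-\mu(X_i,\theta)\bigr)^2,\qquad n\ge n_{\rm st},$$ are strongly consistent: $\hat\theta_n^{(\mathrm{LS})}\to\bar\theta$ almost surely as $n\to\infty$.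
   Context: A design is a finitely supported probability measure on $\mathcal{X}$; $\delta_x$ denotes the point mass at $x$. The information matrix of a design $\xi$ at $\theta$ is $M(\xi,\theta)=\sum_{x\in\mathrm{supp}(\xi)}\xi(x)f_\theta(x)f_\theta^{\mathsf T}(x)$. The estimators $\hat\theta_n$ and $\hat\theta_n^{(\mathrm{LS})}$ are $\Theta$-valued functions of the data available at stage $n$ (measurable random variables). *)

theory Defs
  imports "HOL-Analysis.Analysis" "HOL-Probability.Probability"
begin

text \<open>A design is a finitely supported probability measure on the design space,
  represented by its weight function.\<close>

definition outer_prod :: "real ^ 'p \<Rightarrow> real ^ 'p ^ 'p" where
  "outer_prod v = (\<chi> i j. v $ i * v $ j)"

definition info_matrix ::
  "('t \<Rightarrow> 'x \<Rightarrow> real ^ 'p) \<Rightarrow> ('x \<Rightarrow> real) \<Rightarrow> 't \<Rightarrow> real ^ 'p ^ 'p" where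
  "info_matrix f \<xi> \<theta> = (\<Sum>x\<in>{x. \<xi> x \<noteq> 0}. \<xi> x *\<^sub>R outer_prod (f \<theta> x))"

definition emp_design :: "(nat \<Rightarrow> 'x) \<Rightarrow> nat \<Rightarrow> 'x \<Rightarrow> real" where
  "emp_design xs n = (\<lambda>x. real (card {i\<in>{1..n}. xs i = x}) / real n)"

definition pos_def_mat :: "real ^ 'p ^ 'p \<Rightarrow> bool" where
  "pos_def_mat A \<longleftrightarrow> (\<forall>v. v \<noteq> 0 \<longrightarrow> v \<bullet> (A *v v) > 0)"

end

theory Submission
  imports Defs "HOL-Library.Discrete_Functions"
begin


lemma abs_prod_le_sq: "\<bar>x * y\<bar> \<le> x^2 + (y::real)^2"
proof -
  have "0 \<le> (\<bar>x\<bar> - \<bar>y\<bar>)^2" by simp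
  hence "2 * (\<bar>x\<bar> * \<bar>y\<bar>) \<le> x^2 + y^2" by (simp add: power2_eq_square algebra_simps)
  moreover have "0 \<le> \<bar>x\<bar> * \<bar>y\<bar>" by simp
  ultimately show ?thesis unfolding abs_mult by linarith
qed

lemma det_slln:
  fixes s t :: "nat \<Rightarrow> real"
  assumes st: "\<And>m n. m^2 \<le> n \<Longrightarrow> n < (Suc m)^2 \<Longrightarrow> \<bar>s n - s (m^2)\<bar> \<le> t m"
    and ev: "\<And>j. eventually (\<lambda>m. \<bar>s (m^2)\<bar> \<le> real (m^2) / real (Suc j) \<and> t m \<le> real (m^2) / real (Suc j)) sequentially"
  shows "(\<lambda>n. s n / real n) \<longlonglongrightarrow> 0"
proof (rule LIMSEQ_I)
  fix r :: real assume r: "0 < r"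
  obtain j where j: "2 / real (Suc j) < r"
  proof -
    obtain j where "inverse (real (Suc j)) < r/2" using reals_Archimedean r
      by (metis half_gt_zero)
    then show ?thesis using that[of j] by (simp add: field_simps)
  qed
  from ev[of j] obtain M0 where M0: "\<And>m. m \<ge> M0 \<Longrightarrow> \<bar>s (m^2)\<bar> \<le> real (m^2) / real (Suc j) \<and> t m \<le> real (m^2) / real (Suc j)"
    unfolding eventually_sequentially by blast
  show "\<exists>N. \<forall>n\<ge>N. norm (s n / real n - 0) < r"
  proof (intro exI allI impI)
    fix n assume n: "n \<ge> (Suc M0)^2"
    define m where "m = floor_sqrt n"
    have m1: "m^2 \<le> n" "n < (Suc m)^2" unfolding m_def by (auto simp: Suc_floor_sqrt_power2_gt)
    have "Suc M0 \<le> m" unfolding m_def using n le_floor_sqrtI by blast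
    hence mM: "m \<ge> M0" "m \<ge> 1" by auto
    have npos: "real n > 0" using n by (simp add: power2_eq_square)
    have "\<bar>s n\<bar> \<le> \<bar>s (m^2)\<bar> + t m" using st[OF m1] by linarith
    also have "\<dots> \<le> 2 * real (m^2) / real (Suc j)" using M0[OF mM(1)] by (simp add: field_simps)
    also have "\<dots> \<le> 2 * real n / real (Suc j)" using m1(1)
      by (intro divide_right_mono) auto
    finally have "\<bar>s n\<bar> / real n \<le> 2 / real (Suc j)" using npos by (simp add: field_simps)
    then show "norm (s n / real n - 0) < r" using j by (simp add: abs_divide)
  qed
qed

context prob_space begin

lemma orth_sum_sq:
  fixes a :: "nat \<Rightarrow> 'a \<Rightarrow> real"
  assumes meas: "\<And>i. a i \<in> borel_measurable M"
    and sq: "\<And>i. integrable M (\<lambda>\<omega>. (a i \<omega>)^2)"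
    and orth: "\<And>i j. 1 \<le> i \<Longrightarrow> i < j \<Longrightarrow> (\<integral>\<omega>. a i \<omega> * a j \<omega> \<partial>M) = 0"
    and I: "finite I" "I \<subseteq> {1..}"
  shows "(\<integral>\<omega>. (\<Sum>i\<in>I. a i \<omega>)^2 \<partial>M) = (\<Sum>i\<in>I. \<integral>\<omega>. (a i \<omega>)^2 \<partial>M)"
proof -
  have ip: "integrable M (\<lambda>\<omega>. a i \<omega> * a j \<omega>)" for i j
    by (rule Bochner_Integration.integrable_bound[OF Bochner_Integration.integrable_add[OF sq[of i] sq[of j]]])
       (use meas in \<open>auto simp: abs_prod_le_sq\<close>)
  have o2: "(\<integral>\<omega>. a i \<omega> * a j \<omega> \<partial>M) = 0" if "i \<in> I" "j \<in> I" "i \<noteq> j" for i j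
  proof (cases "i < j")
    case True thus ?thesis using orth that I by auto
  next
    case False hence "j < i" using that by auto
    thus ?thesis using orth[of j i] that I by (auto simp: mult.commute)
  qed
  have "(\<integral>\<omega>. (\<Sum>i\<in>I. a i \<omega>)^2 \<partial>M) = (\<integral>\<omega>. (\<Sum>i\<in>I. \<Sum>j\<in>I. a i \<omega> * a j \<omega>) \<partial>M)"
    by (simp add: power2_eq_square sum_product)
  also have "\<dots> = (\<Sum>i\<in>I. \<Sum>j\<in>I. \<integral>\<omega>. a i \<omega> * a j \<omega> \<partial>M)"
    using ip by (simp add: integral_sum)
  also have "\<dots> = (\<Sum>i\<in>I. \<integral>\<omega>. a i \<omega> * a i \<omega> \<partial>M)"
  proof (rule sum.cong[OF refl])
    fix i assume i: "i \<in> I"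
    have "(\<Sum>j\<in>I. \<integral>\<omega>. a i \<omega> * a j \<omega> \<partial>M) = (\<integral>\<omega>. a i \<omega> * a i \<omega> \<partial>M) + (\<Sum>j\<in>I-{i}. \<integral>\<omega>. a i \<omega> * a j \<omega> \<partial>M)"
      using i I by (simp add: sum.remove)
    also have "(\<Sum>j\<in>I-{i}. \<integral>\<omega>. a i \<omega> * a j \<omega> \<partial>M) = 0"
      using o2 i by (intro sum.neutral) auto
    finally show "(\<Sum>j\<in>I. \<integral>\<omega>. a i \<omega> * a j \<omega> \<partial>M) = (\<integral>\<omega>. a i \<omega> * a i \<omega> \<partial>M)" by simp
  qed
  finally show ?thesis by (simp add: power2_eq_square)
qed

lemma sum_abs_sq_le:
  fixes a :: "nat \<Rightarrow> real"
  shows "(\<Sum>i\<in>I. \<bar>a i\<bar>)^2 \<le> real (card I) * (\<Sum>i\<in>I. (a i)^2)"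
  using Cauchy_Schwarz_ineq_sum[of "\<lambda>i. 1" "\<lambda>i. \<bar>a i\<bar>" I] by simp

lemma integrable_sum_sq:
  fixes b :: "nat \<Rightarrow> 'a \<Rightarrow> real"
  assumes meas: "\<And>i. b i \<in> borel_measurable M"
    and sq: "\<And>i. integrable M (\<lambda>\<omega>. (b i \<omega>)^2)" and I: "finite I"
  shows "integrable M (\<lambda>\<omega>. (\<Sum>i\<in>I. b i \<omega>)^2)"
proof (rule Bochner_Integration.integrable_bound)
  show "integrable M (\<lambda>\<omega>. real (card I) * (\<Sum>i\<in>I. (b i \<omega>)^2))"
    using sq by auto
  show "(\<lambda>\<omega>. (\<Sum>i\<in>I. b i \<omega>)^2) \<in> borel_measurable M" using meas by measurable
  show "AE \<omega> in M. norm ((\<Sum>i\<in>I. b i \<omega>)^2) \<le> norm (real (card I) * (\<Sum>i\<in>I. (b i \<omega>)^2))"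
  proof (rule AE_I2)
    fix \<omega>
    have "(\<Sum>i\<in>I. b i \<omega>)^2 = \<bar>\<Sum>i\<in>I. b i \<omega>\<bar>^2" by simp
    also have "\<dots> \<le> (\<Sum>i\<in>I. \<bar>b i \<omega>\<bar>)^2"
      by (rule power_mono[OF sum_abs]) simp
    also have "\<dots> \<le> real (card I) * (\<Sum>i\<in>I. (b i \<omega>)^2)"
      using sum_abs_sq_le[of "\<lambda>i. b i \<omega>" I] by simp
    finally show "norm ((\<Sum>i\<in>I. b i \<omega>)^2) \<le> norm (real (card I) * (\<Sum>i\<in>I. (b i \<omega>)^2))"
      by (simp add: sum_nonneg)
  qed
qed

lemma orth_slln:
  fixes a :: "nat \<Rightarrow> 'a \<Rightarrow> real" and K :: real
  assumes meas: "\<And>i. a i \<in> borel_measurable M"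
    and sq: "\<And>i. integrable M (\<lambda>\<omega>. (a i \<omega>)^2)"
    and orth: "\<And>i j. 1 \<le> i \<Longrightarrow> i < j \<Longrightarrow> (\<integral>\<omega>. a i \<omega> * a j \<omega> \<partial>M) = 0"
    and bnd: "\<And>i. 1 \<le> i \<Longrightarrow> (\<integral>\<omega>. (a i \<omega>)^2 \<partial>M) \<le> K"
  shows "AE \<omega> in M. (\<lambda>n. (\<Sum>i=1..n. a i \<omega>) / real n) \<longlonglongrightarrow> 0"
proof -
  define S where "S n \<omega> = (\<Sum>i=1..n. a i \<omega>)" for n \<omega>
  define T where "T m \<omega> = (\<Sum>i\<in>{m^2<..<(Suc m)^2}. \<bar>a i \<omega>\<bar>)" for m \<omega>
  have [measurable]: "S n \<in> borel_measurable M" "T m \<in> borel_measurable M" for n m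
    unfolding S_def T_def using meas by measurable
  have "0 \<le> (\<integral>\<omega>. (a 1 \<omega>)^2 \<partial>M)" by (rule integral_nonneg_AE) auto
  hence K0: "0 \<le> K" using bnd[of 1] by linarith
  have intS: "integrable M (\<lambda>\<omega>. (S n \<omega>)^2)" for n
    unfolding S_def by (rule integrable_sum_sq[OF meas sq]) auto
  have intT: "integrable M (\<lambda>\<omega>. (T m \<omega>)^2)" for m
    unfolding T_def by (rule integrable_sum_sq) (use meas sq in auto)
  have ES: "(\<integral>\<omega>. (S n \<omega>)^2 \<partial>M) \<le> K * real n" for n
  proof -
    have "(\<integral>\<omega>. (S n \<omega>)^2 \<partial>M) = (\<Sum>i=1..n. \<integral>\<omega>. (a i \<omega>)^2 \<partial>M)"
      unfolding S_def by (rule orth_sum_sq[OF meas sq orth]) auto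
    also have "\<dots> \<le> (\<Sum>i=1..n. K)" by (rule sum_mono) (use bnd in auto)
    finally show ?thesis by (simp add: mult.commute)
  qed
  have cardT: "card {m^2<..<(Suc m)^2} = 2 * m" for m
    by (simp add: power2_eq_square)
  have ET: "(\<integral>\<omega>. (T m \<omega>)^2 \<partial>M) \<le> real (2*m) * (real (2*m) * K)" for m
  proof -
    let ?I = "{m^2<..<(Suc m)^2}"
    have "(\<integral>\<omega>. (T m \<omega>)^2 \<partial>M) \<le> (\<integral>\<omega>. real (card ?I) * (\<Sum>i\<in>?I. (a i \<omega>)^2) \<partial>M)"
    proof (rule integral_mono)
      show "integrable M (\<lambda>\<omega>. (T m \<omega>)^2)" by (rule intT)
      show "integrable M (\<lambda>\<omega>. real (card ?I) * (\<Sum>i\<in>?I. (a i \<omega>)^2))" using sq by auto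
      show "(T m \<omega>)^2 \<le> real (card ?I) * (\<Sum>i\<in>?I. (a i \<omega>)^2)" for \<omega>
        unfolding T_def using sum_abs_sq_le[of "\<lambda>i. a i \<omega>" ?I] by simp
    qed
    also have "\<dots> = real (card ?I) * (\<Sum>i\<in>?I. \<integral>\<omega>. (a i \<omega>)^2 \<partial>M)"
      using sq by (simp add: integral_sum)
    also have "\<dots> \<le> real (card ?I) * (\<Sum>i\<in>?I. K)"
      by (intro mult_left_mono sum_mono) (use bnd in \<open>auto simp: power2_eq_square\<close>)
    finally show ?thesis using cardT[of m] by simp
  qed
  define A where "A j m = {\<omega>\<in>space M. real (m^2) / real (Suc j) \<le> \<bar>S (m^2) \<omega>\<bar>}" for j m
  define B where "B j m = {\<omega>\<in>space M. real (m^2) / real (Suc j) \<le> \<bar>T m \<omega>\<bar>}" for j m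
  have [measurable]: "A j m \<in> sets M" "B j m \<in> sets M" for j m unfolding A_def B_def by measurable
  have sumg: "summable (\<lambda>m. (4 * K * real (Suc j)^2) * inverse (real m ^ 2))" for j
    by (rule summable_mult) (rule inverse_power_summable, simp)
  have PA: "measure M (A j m) \<le> (4 * K * real (Suc j)^2) * inverse (real m ^ 2)" if m: "m \<ge> 1" for j m
  proof -
    have c: "real (m^2) / real (Suc j) > 0" using m by simp
    have "measure M (A j m) \<le> (\<integral>\<omega>. (S (m^2) \<omega>)^2 \<partial>M) / (real (m^2) / real (Suc j))^2"
      unfolding A_def by (rule second_moment_method[OF _ intS c]) simp
    also have "\<dots> \<le> K * real (m^2) / (real (m^2) / real (Suc j))^2"
      by (intro divide_right_mono) (use ES[of "m^2"] in auto)
    also have "\<dots> = K * real (Suc j)^2 * inverse (real m ^ 2)"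
      using m by (simp add: field_simps power2_eq_square)
    also have "\<dots> \<le> (4 * K * real (Suc j)^2) * inverse (real m ^ 2)"
      using K0 by (intro mult_right_mono) auto
    finally show ?thesis .
  qed
  have PB: "measure M (B j m) \<le> (4 * K * real (Suc j)^2) * inverse (real m ^ 2)" if m: "m \<ge> 1" for j m
  proof -
    have c: "real (m^2) / real (Suc j) > 0" using m by simp
    have "measure M (B j m) \<le> (\<integral>\<omega>. (T m \<omega>)^2 \<partial>M) / (real (m^2) / real (Suc j))^2"
      unfolding B_def by (rule second_moment_method[OF _ intT c]) simp
    also have "\<dots> \<le> real (2*m) * (real (2*m) * K) / (real (m^2) / real (Suc j))^2"
      by (intro divide_right_mono) (use ET[of m] in auto)
    also have "\<dots> = (4 * K * real (Suc j)^2) * inverse (real m ^ 2)"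
      using m by (simp add: field_simps power2_eq_square)
    finally show ?thesis .
  qed
  have AEA: "AE \<omega> in M. eventually (\<lambda>m. \<omega> \<in> space M - A j m) sequentially" for j
  proof (rule borel_cantelli_AE1)
    show "summable (\<lambda>m. measure M (A j m))"
      by (rule summable_comparison_test'[OF sumg[of j], of 1]) (use PA in auto)
  qed (auto simp: emeasure_eq_measure)
  have AEB: "AE \<omega> in M. eventually (\<lambda>m. \<omega> \<in> space M - B j m) sequentially" for j
  proof (rule borel_cantelli_AE1)
    show "summable (\<lambda>m. measure M (B j m))"
      by (rule summable_comparison_test'[OF sumg[of j], of 1]) (use PB in auto)
  qed (auto simp: emeasure_eq_measure)
  have "AE \<omega> in M. \<forall>j. eventually (\<lambda>m. \<omega> \<in> space M - A j m) sequentially \<and> eventually (\<lambda>m. \<omega> \<in> space M - B j m) sequentially"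
    using AEA AEB by (simp add: AE_all_countable AE_conj_iff)
  then show ?thesis
  proof (rule AE_mp, intro AE_I2 impI)
    fix \<omega> assume \<omega>: "\<omega> \<in> space M" and H: "\<forall>j. eventually (\<lambda>m. \<omega> \<in> space M - A j m) sequentially \<and> eventually (\<lambda>m. \<omega> \<in> space M - B j m) sequentially"
    have "(\<lambda>n. S n \<omega> / real n) \<longlonglongrightarrow> 0"
    proof (rule det_slln)
      fix m n :: nat assume mn: "m^2 \<le> n" "n < (Suc m)^2"
      have split: "{1..n} = {1..m^2} \<union> {m^2<..n}" using mn by auto
      have "S n \<omega> - S (m^2) \<omega> = (\<Sum>i\<in>{m^2<..n}. a i \<omega>)"
        unfolding S_def split by (subst sum.union_disjoint) auto
      also have "\<bar>\<dots>\<bar> \<le> (\<Sum>i\<in>{m^2<..n}. \<bar>a i \<omega>\<bar>)" by (rule sum_abs)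
      also have "\<dots> \<le> T m \<omega>" unfolding T_def
        by (rule sum_mono2) (use mn in auto)
      finally show "\<bar>S n \<omega> - S (m^2) \<omega>\<bar> \<le> T m \<omega>" .
    next
      fix j
      have "eventually (\<lambda>m. \<omega> \<in> space M - A j m \<and> \<omega> \<in> space M - B j m) sequentially"
        using eventually_conj[OF conjunct1[OF H[rule_format, of j]] conjunct2[OF H[rule_format, of j]]] by simp
      then show "eventually (\<lambda>m. \<bar>S (m^2) \<omega>\<bar> \<le> real (m^2) / real (Suc j) \<and> T m \<omega> \<le> real (m^2) / real (Suc j)) sequentially"
        by eventually_elim (auto simp: A_def B_def \<omega>)
    qed
    then show "(\<lambda>n. (\<Sum>i=1..n. a i \<omega>) / real n) \<longlonglongrightarrow> 0" unfolding S_def .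
  qed
qed

end


lemma sfs_of:
  assumes "prob_space M" "subalgebra M G"
  shows "sigma_finite_subalgebra M G"
proof -
  interpret prob_space M by fact
  show ?thesis
    by (rule finite_measure_subalgebra_is_sigma_finite)
       (simp add: finite_measure_subalgebra_def finite_measure_subalgebra_axioms_def assms(2) finite_measure_axioms)
qed

lemma filt_lift:
  fixes F :: "nat \<Rightarrow> 'a measure"
  assumes F_sub: "\<And>n. subalgebra M (F n)"
    and F_mono: "\<And>n. sets (F n) \<subseteq> sets (F (Suc n))"
    and ab: "a \<le> b" and g: "g \<in> borel_measurable (F a)"
  shows "g \<in> borel_measurable (F b)"
proof -
  have "sets (F a) \<subseteq> sets (F b)"
    using lift_Suc_mono_le[of "\<lambda>n. sets (F n)", OF F_mono ab] by simp
  moreover have "space (F a) = space (F b)" using F_sub by (simp add: subalgebra_def)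
  ultimately have "subalgebra (F b) (F a)" by (simp add: subalgebra_def)
  thus ?thesis using g by (rule measurable_from_subalg)
qed

lemma mslln:
  fixes M :: "'a measure" and F :: "nat \<Rightarrow> 'a measure" and d :: "nat \<Rightarrow> 'a \<Rightarrow> real"
  assumes prob: "prob_space M"
    and F_sub: "\<And>n. subalgebra M (F n)"
    and F_mono: "\<And>n. sets (F n) \<subseteq> sets (F (Suc n))"
    and d_meas: "\<And>i. 1 \<le> i \<Longrightarrow> d i \<in> borel_measurable (F i)"
    and d_sq: "\<And>i. 1 \<le> i \<Longrightarrow> integrable M (\<lambda>\<omega>. (d i \<omega>)^2)"
    and d_mean: "\<And>i. 1 \<le> i \<Longrightarrow> AE \<omega> in M. real_cond_exp M (F (i-1)) (d i) \<omega> = 0"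
    and d_var: "AE \<omega> in M. \<exists>B. \<forall>i\<ge>1. real_cond_exp M (F (i-1)) (\<lambda>\<omega>. (d i \<omega>)^2) \<omega> \<le> B"
  shows "AE \<omega> in M. (\<lambda>n. (\<Sum>i=1..n. d i \<omega>) / real n) \<longlonglongrightarrow> 0"
proof -
  interpret prob_space M by (rule prob)
  have sfs: "sigma_finite_subalgebra M (F k)" for k by (rule sfs_of[OF prob F_sub])
  have dM: "d i \<in> borel_measurable M" if "1 \<le> i" for i
    using measurable_from_subalg[OF F_sub d_meas[OF that]] .
  define v where "v i = real_cond_exp M (F (i-1)) (\<lambda>\<omega>. (d i \<omega>)^2)" for i
  have vF: "v i \<in> borel_measurable (F (i-1))" for i unfolding v_def by simp
  have vM: "v i \<in> borel_measurable M" for i unfolding v_def by simp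
  define dK where "dK K i \<omega> = (if 1 \<le> i \<and> v i \<omega> \<le> real K then d i \<omega> else 0)" for K i \<omega>
  have dKF: "dK K i \<in> borel_measurable (F i)" for K i
  proof (cases "1 \<le> i")
    case True
    have "v i \<in> borel_measurable (F i)" by (rule filt_lift[where F=F and a="i-1", OF F_sub F_mono _ vF]) simp
    with d_meas[OF True] show ?thesis unfolding dK_def using True by measurable
  next
    case False thus ?thesis unfolding dK_def by simp
  qed
  have dKM: "dK K i \<in> borel_measurable M" for K i using measurable_from_subalg[OF F_sub dKF] .
  have dKsq: "integrable M (\<lambda>\<omega>. (dK K i \<omega>)^2)" for K i
  proof (cases "1 \<le> i")
    case True
    have m: "(\<lambda>\<omega>. (dK K i \<omega>)^2) \<in> borel_measurable M" using dKM[of K i] by measurable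
    show ?thesis
      by (rule Bochner_Integration.integrable_bound[OF d_sq[OF True] m]) (auto simp: dK_def)
  next
    case False thus ?thesis by (simp add: dK_def)
  qed
  have lim: "AE \<omega> in M. (\<lambda>n. (\<Sum>i=1..n. dK K i \<omega>) / real n) \<longlonglongrightarrow> 0" for K
  proof (rule orth_slln[where K="real K"])
    show "dK K i \<in> borel_measurable M" for i by (rule dKM)
    show "integrable M (\<lambda>\<omega>. (dK K i \<omega>)^2)" for i by (rule dKsq)
  next
    fix i j :: nat assume ij: "1 \<le> i" "i < j"
    have j1: "1 \<le> j" using ij by auto
    define h where "h \<omega> = dK K i \<omega> * (if v j \<omega> \<le> real K then 1 else 0)" for \<omega>
    have hF: "h \<in> borel_measurable (F (j-1))"
    proof -
      have "dK K i \<in> borel_measurable (F (j-1))" by (rule filt_lift[where F=F and a=i, OF F_sub F_mono _ dKF]) (use ij in auto)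
      thus ?thesis unfolding h_def using vF[of j] by measurable
    qed
    have eq: "dK K i \<omega> * dK K j \<omega> = h \<omega> * d j \<omega>" for \<omega>
      using ij by (simp add: dK_def h_def)
    have inthd: "integrable M (\<lambda>\<omega>. h \<omega> * d j \<omega>)"
    proof (rule Bochner_Integration.integrable_bound)
      show "integrable M (\<lambda>\<omega>. (d i \<omega>)^2 + (d j \<omega>)^2)" using d_sq ij by auto
      show "(\<lambda>\<omega>. h \<omega> * d j \<omega>) \<in> borel_measurable M"
        using measurable_from_subalg[OF F_sub hF] dM[OF j1] by measurable
      show "AE \<omega> in M. norm (h \<omega> * d j \<omega>) \<le> norm ((d i \<omega>)^2 + (d j \<omega>)^2)"
        using ij by (intro AE_I2) (auto simp: h_def dK_def abs_prod_le_sq)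
    qed
    have "(\<integral>\<omega>. h \<omega> * real_cond_exp M (F (j-1)) (d j) \<omega> \<partial>M) = (\<integral>\<omega>. h \<omega> * d j \<omega> \<partial>M)"
      by (rule sigma_finite_subalgebra.real_cond_exp_intg(2)[OF sfs inthd hF dM]) (use ij in auto)
    moreover have "(\<integral>\<omega>. h \<omega> * real_cond_exp M (F (j-1)) (d j) \<omega> \<partial>M) = (\<integral>\<omega>. 0 \<partial>M)"
      by (rule integral_cong_AE) (use d_mean[of j] ij measurable_from_subalg[OF F_sub hF] in auto)
    ultimately show "(\<integral>\<omega>. dK K i \<omega> * dK K j \<omega> \<partial>M) = 0" by (simp add: eq)
  next
    fix i :: nat assume i: "1 \<le> i"
    define ind where "ind \<omega> = (if v i \<omega> \<le> real K then 1 else (0::real))" for \<omega>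
    have indF: "ind \<in> borel_measurable (F (i-1))" unfolding ind_def using vF[of i] by measurable
    have eq: "(dK K i \<omega>)^2 = ind \<omega> * (d i \<omega>)^2" for \<omega> using i by (simp add: dK_def ind_def)
    have int1: "integrable M (\<lambda>\<omega>. ind \<omega> * (d i \<omega>)^2)"
      using dKsq[of K i] by (simp add: eq)
    have "(\<integral>\<omega>. ind \<omega> * v i \<omega> \<partial>M) = (\<integral>\<omega>. ind \<omega> * (d i \<omega>)^2 \<partial>M)"
      unfolding v_def by (rule sigma_finite_subalgebra.real_cond_exp_intg(2)[OF sfs int1 indF]) (use dM[OF i] in simp)
    moreover have intv: "integrable M (\<lambda>\<omega>. ind \<omega> * v i \<omega>)"
      unfolding v_def by (rule sigma_finite_subalgebra.real_cond_exp_intg(1)[OF sfs int1 indF]) (use dM[OF i] in simp)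
    moreover have "(\<integral>\<omega>. ind \<omega> * v i \<omega> \<partial>M) \<le> (\<integral>\<omega>. real K \<partial>M)"
      by (rule integral_mono[OF intv]) (auto simp: ind_def)
    ultimately show "(\<integral>\<omega>. (dK K i \<omega>)^2 \<partial>M) \<le> real K"
      by (simp add: eq prob_space)
  qed
  have "AE \<omega> in M. \<forall>K. (\<lambda>n. (\<Sum>i=1..n. dK K i \<omega>) / real n) \<longlonglongrightarrow> 0"
    using lim by (simp add: AE_all_countable)
  with d_var show ?thesis
  proof (eventually_elim)
    case (elim \<omega>)
    then obtain B where B: "\<And>i. 1 \<le> i \<Longrightarrow> v i \<omega> \<le> B" unfolding v_def by auto
    define K where "K = nat \<lceil>B\<rceil>"
    have "B \<le> real K" unfolding K_def by linarith
    hence "\<And>i. 1 \<le> i \<Longrightarrow> dK K i \<omega> = d i \<omega>" using B by (force simp: dK_def)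
    hence "(\<Sum>i=1..n. dK K i \<omega>) = (\<Sum>i=1..n. d i \<omega>)" for n by (intro sum.cong) auto
    hence eqf: "(\<lambda>n. (\<Sum>i=1..n. dK K i \<omega>) / real n) = (\<lambda>n. (\<Sum>i=1..n. d i \<omega>) / real n)" by presburger
    have "(\<lambda>n. (\<Sum>i=1..n. dK K i \<omega>) / real n) \<longlonglongrightarrow> 0" using elim by blast
    thus ?case unfolding eqf .
  qed
qed


lemma matrix_inv_right:
  assumes "invertible (A :: real^'n^'n)"
  shows "A ** matrix_inv A = mat 1"
proof -
  have "\<exists>A'. A ** A' = mat 1 \<and> A' ** A = mat 1" using assms by (simp add: invertible_def)
  hence "A ** matrix_inv A = mat 1 \<and> matrix_inv A ** A = mat 1"
    unfolding matrix_inv_def by (rule someI_ex)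
  thus ?thesis by simp
qed

lemma pd_invertible:
  fixes A :: "real^'n^'n"
  assumes pd: "\<And>v. v \<noteq> 0 \<Longrightarrow> 0 < v \<bullet> (A *v v)"
  shows "invertible A"
proof -
  have "inj ((*v) A)"
  proof (rule injI)
    fix x y assume "A *v x = A *v y"
    hence "A *v (x - y) = 0" by (simp add: matrix_vector_mult_diff_distrib)
    hence "(x - y) \<bullet> (A *v (x - y)) = 0" by simp
    thus "x = y" using pd[of "x - y"] by (cases "x - y = 0") auto
  qed
  then obtain B where "B ** A = mat 1" using matrix_left_invertible_injective by blast
  thus ?thesis using invertible_left_inverse by blast
qed

lemma pd_inv_apply:
  fixes A :: "real^'n^'n"
  assumes pd: "\<And>v. v \<noteq> 0 \<Longrightarrow> 0 < v \<bullet> (A *v v)"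
  shows "A *v (matrix_inv A *v a) = a"
  using matrix_inv_right[OF pd_invertible[OF pd]] by (simp add: matrix_vector_mul_assoc)

lemma inner_info:
  fixes f :: "'t \<Rightarrow> 'x \<Rightarrow> real^'p"
  shows "w \<bullet> (info_matrix f \<xi> \<theta> *v b) = (\<Sum>x\<in>{x. \<xi> x \<noteq> 0}. \<xi> x * ((w \<bullet> f \<theta> x) * (b \<bullet> f \<theta> x)))"
proof -
  let ?S = "{x. \<xi> x \<noteq> 0}"
  have comp: "info_matrix f \<xi> \<theta> $ i $ j = (\<Sum>x\<in>?S. \<xi> x * (f \<theta> x $ i * f \<theta> x $ j))" for i j
    unfolding info_matrix_def by (simp add: sum_component outer_prod_def)
  have "w \<bullet> (info_matrix f \<xi> \<theta> *v b) = (\<Sum>i\<in>UNIV. w $ i * (\<Sum>j\<in>UNIV. (\<Sum>x\<in>?S. \<xi> x * (f \<theta> x $ i * f \<theta> x $ j)) * b $ j))"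
    by (simp add: inner_vec_def matrix_vector_mult_def comp)
  also have "\<dots> = (\<Sum>i\<in>UNIV. \<Sum>j\<in>UNIV. \<Sum>x\<in>?S. \<xi> x * ((w $ i * f \<theta> x $ i) * (b $ j * f \<theta> x $ j)))"
    by (simp add: sum_distrib_left sum_distrib_right mult_ac)
  also have "\<dots> = (\<Sum>x\<in>?S. \<Sum>i\<in>UNIV. \<Sum>j\<in>UNIV. \<xi> x * ((w $ i * f \<theta> x $ i) * (b $ j * f \<theta> x $ j)))"
    by (subst sum.swap) (simp add: sum.swap[of _ UNIV ?S])
  also have "\<dots> = (\<Sum>x\<in>?S. \<xi> x * ((w \<bullet> f \<theta> x) * (b \<bullet> f \<theta> x)))"
    by (simp add: inner_vec_def sum_distrib_left sum_distrib_right mult_ac)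
  finally show ?thesis .
qed

lemma emp_sum:
  fixes x :: "nat \<Rightarrow> 'x"
  assumes n: "n > 0"
  shows "(\<Sum>y\<in>{y. emp_design x n y \<noteq> 0}. emp_design x n y * G y) = (\<Sum>i=1..n. G (x i)) / real n"
proof -
  have S: "{y. emp_design x n y \<noteq> 0} = x ` {1..n}"
  proof -
    have "emp_design x n y \<noteq> 0 \<longleftrightarrow> (\<exists>i\<in>{1..n}. x i = y)" for y
      using n by (auto simp: emp_design_def card_eq_0_iff)
    thus ?thesis by auto
  qed
  have "(\<Sum>i=1..n. G (x i)) = (\<Sum>y\<in>x ` {1..n}. \<Sum>i\<in>{i. i \<in> {1..n} \<and> x i = y}. G (x i))"
    by (rule sum.image_gen) simp
  also have "\<dots> = (\<Sum>y\<in>x ` {1..n}. real (card {i\<in>{1..n}. x i = y}) * G y)"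
    by (intro sum.cong refl) simp
  finally have "(\<Sum>i=1..n. G (x i)) / real n = (\<Sum>y\<in>x ` {1..n}. real (card {i\<in>{1..n}. x i = y}) * G y) / real n" by simp
  also have "\<dots> = (\<Sum>y\<in>x ` {1..n}. emp_design x n y * G y)"
    by (simp add: emp_design_def sum_divide_distrib)
  finally show ?thesis by (simp add: S)
qed

lemma qf_emp:
  fixes f :: "'t \<Rightarrow> 'x \<Rightarrow> real^'p"
  assumes n: "n > 0"
  shows "w \<bullet> (info_matrix f (emp_design x n) \<theta> *v b) = (\<Sum>i=1..n. (w \<bullet> f \<theta> (x i)) * (b \<bullet> f \<theta> (x i))) / real n"
  unfolding inner_info by (rule emp_sum[OF n])


lemma unif_cont_pair:
  fixes g :: "'x::metric_space \<Rightarrow> 't::metric_space \<Rightarrow> 'b::metric_space"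
  assumes c: "continuous_on (X \<times> T) (\<lambda>(x, t). g x t)" and X: "compact X" and T: "compact T"
    and e: "e > 0"
  obtains d where "d > 0"
    "\<And>x x' t t'. x \<in> X \<Longrightarrow> x' \<in> X \<Longrightarrow> t \<in> T \<Longrightarrow> t' \<in> T \<Longrightarrow> dist x x' < d \<Longrightarrow> dist t t' < d \<Longrightarrow> dist (g x t) (g x' t') < e"
proof -
  have "uniformly_continuous_on (X \<times> T) (\<lambda>(x, t). g x t)"
    by (rule compact_uniformly_continuous[OF c compact_Times[OF X T]])
  then obtain d where d: "d > 0" and H: "\<And>p p'. p \<in> X \<times> T \<Longrightarrow> p' \<in> X \<times> T \<Longrightarrow> dist p' p < d \<Longrightarrow> dist ((\<lambda>(x, t). g x t) p') ((\<lambda>(x, t). g x t) p) < e"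
    using uniformly_continuous_onE[OF _ e] by metis
  show ?thesis
  proof (rule that[of "d / 2"])
    show "d / 2 > 0" using d by simp
    fix x x' t t' assume xx: "x \<in> X" "x' \<in> X" "t \<in> T" "t' \<in> T" "dist x x' < d / 2" "dist t t' < d / 2"
    have "dist (x, t) (x', t') \<le> dist x x' + dist t t'"
    proof -
      have "(dist x x')^2 + (dist t t')^2 \<le> (dist x x' + dist t t')^2" by (simp add: power2_sum)
      hence "sqrt ((dist x x')^2 + (dist t t')^2) \<le> sqrt ((dist x x' + dist t t')^2)" by (rule real_sqrt_le_mono)
      thus ?thesis unfolding dist_Pair_Pair by simp
    qed
    hence "dist (x, t) (x', t') < d" using xx by simp
    thus "dist (g x t) (g x' t') < e" using H[of "(x', t')" "(x, t)"] xx by auto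
  qed
qed

locale wynn_seq =
  fixes XX :: "'x::metric_space set" and TT :: "'t::metric_space set"
    and f :: "'t \<Rightarrow> 'x \<Rightarrow> real ^ 'p::finite"
    and n_st :: nat and xs :: "nat \<Rightarrow> 'x" and x :: "nat \<Rightarrow> 'x" and th :: "nat \<Rightarrow> 't"
  assumes X_compact: "compact XX" and T_compact: "compact TT" and T_ne: "TT \<noteq> {}"
    and f_cont: "continuous_on (XX \<times> TT) (\<lambda>(x, \<theta>). f \<theta> x)"
    and init_pts: "\<And>i. 1 \<le> i \<Longrightarrow> i \<le> n_st \<Longrightarrow> xs i \<in> XX"
    and init_x: "\<And>i. 1 \<le> i \<Longrightarrow> i \<le> n_st \<Longrightarrow> x i = xs i"
    and init_pd: "\<And>\<theta>. \<theta> \<in> TT \<Longrightarrow> pos_def_mat (info_matrix f (emp_design xs n_st) \<theta>)"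
    and th_in: "\<And>n. n \<ge> n_st \<Longrightarrow> th n \<in> TT"
    and wynn: "\<And>n. n \<ge> n_st \<Longrightarrow>
        x (Suc n) \<in> XX \<and>
        (\<forall>y\<in>XX. f (th n) y \<bullet> (matrix_inv (info_matrix f (emp_design x n) (th n)) *v f (th n) y)
           \<le> f (th n) (x (Suc n)) \<bullet> (matrix_inv (info_matrix f (emp_design x n) (th n)) *v f (th n) (x (Suc n))))"
begin

definition "Mn n = info_matrix f (emp_design x n) (th n)"
definition "Dn n a = a \<bullet> (matrix_inv (Mn n) *v a)"
definition "Pn n v = (\<Sum>i=1..n. (v \<bullet> f (th n) (x i))^2)"
definition "un n = f (th n) (x (Suc n))"

lemma nst_pos: "n_st \<ge> 1"
proof (rule ccontr)
  assume "\<not> n_st \<ge> 1" hence n0: "n_st = 0" by simp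
  obtain t where t: "t \<in> TT" using T_ne by blast
  have "{y. emp_design xs n_st y \<noteq> 0} = {}" using n0 by (simp add: emp_design_def)
  hence "info_matrix f (emp_design xs n_st) t = 0" by (simp add: info_matrix_def)
  moreover have "(1::real^'p) \<noteq> 0" by (simp add: vec_eq_iff)
  ultimately show False using init_pd[OF t] unfolding pos_def_mat_def by force
qed

lemma x_in: "1 \<le> i \<Longrightarrow> x i \<in> XX"
proof (cases "i \<le> n_st")
  case True
  assume "1 \<le> i" thus ?thesis using True init_x init_pts by simp
next
  case False
  then obtain n where "i = Suc n" "n \<ge> n_st" by (cases i) auto
  thus ?thesis using wynn by simp
qed

lemma f_cont_theta: "y \<in> XX \<Longrightarrow> continuous_on TT (\<lambda>\<theta>. f \<theta> y)"
proof -
  assume y: "y \<in> XX"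
  have "continuous_on TT ((\<lambda>(x, \<theta>). f \<theta> x) \<circ> (\<lambda>\<theta>. (y, \<theta>)))"
    by (rule continuous_on_compose[OF _ continuous_on_subset[OF f_cont]]) (auto intro!: continuous_intros simp: y)
  thus ?thesis by (simp add: o_def)
qed

lemma lam0: "\<exists>l0>0. \<forall>\<theta>\<in>TT. \<forall>v. l0 * (norm v)^2 \<le> (\<Sum>i=1..n_st. (v \<bullet> f \<theta> (xs i))^2)"
proof -
  define h where "h p = (\<Sum>i=1..n_st. (snd p \<bullet> f (fst p) (xs i))^2)" for p :: "'t \<times> (real^'p)"
  let ?S = "TT \<times> sphere (0::real^'p) 1"
  have cS: "compact ?S" by (rule compact_Times[OF T_compact compact_sphere])
  have neS: "?S \<noteq> {}" using T_ne by (auto simp: sphere_def intro: vector_choose_size[of 1])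
  have ch: "continuous_on ?S h"
  proof -
    have "continuous_on ?S (\<lambda>p. f (fst p) (xs i))" if i: "i \<in> {1..n_st}" for i
      by (rule continuous_on_compose2[OF f_cont_theta[of "xs i"]]) (use i init_pts in \<open>auto intro!: continuous_intros\<close>)
    thus ?thesis unfolding h_def by (auto intro!: continuous_intros)
  qed
  obtain p0 where p0: "p0 \<in> ?S" and pmin: "\<And>p. p \<in> ?S \<Longrightarrow> h p0 \<le> h p"
    using continuous_attains_inf[OF cS neS ch] by blast
  have hpos: "h p0 > 0"
  proof -
    have v0: "snd p0 \<noteq> 0" using p0 by auto
    have "0 < snd p0 \<bullet> (info_matrix f (emp_design xs n_st) (fst p0) *v snd p0)"
      using init_pd[of "fst p0"] p0 v0 unfolding pos_def_mat_def by auto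
    also have "\<dots> = h p0 / real n_st" unfolding h_def
      using qf_emp[of n_st "snd p0" f xs "fst p0" "snd p0"] nst_pos by (simp add: power2_eq_square)
    finally show ?thesis using nst_pos by (simp add: divide_pos_pos zero_less_divide_iff)
  qed
  show ?thesis
  proof (intro exI[of _ "h p0"] conjI hpos ballI allI)
    fix \<theta> v assume th: "\<theta> \<in> TT"
    show "h p0 * (norm v)^2 \<le> (\<Sum>i=1..n_st. (v \<bullet> f \<theta> (xs i))^2)"
    proof (cases "v = 0")
      case True thus ?thesis by simp
    next
      case False
      define v1 where "v1 = v /\<^sub>R norm v"
      have "(\<theta>, v1) \<in> ?S" using th False by (simp add: v1_def)
      hence le: "h p0 \<le> h (\<theta>, v1)" by (rule pmin)
      have "h (\<theta>, v1) * (norm v)^2 = (\<Sum>i=1..n_st. (v \<bullet> f \<theta> (xs i))^2)"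
        unfolding h_def v1_def using False
        by (simp add: power_mult_distrib sum_distrib_left[symmetric] sum_distrib_right power_inverse mult.assoc[symmetric])
      with le show ?thesis using mult_right_mono[OF le, of "(norm v)^2"] by simp
    qed
  qed
qed

end


context wynn_seq begin

lemma Fbound: "\<exists>F\<ge>1. \<forall>\<theta>\<in>TT. \<forall>y\<in>XX. norm (f \<theta> y) \<le> F"
proof -
  have "compact ((\<lambda>(x, \<theta>). f \<theta> x) ` (XX \<times> TT))"
    by (rule compact_continuous_image[OF f_cont compact_Times[OF X_compact T_compact]])
  then obtain B where B: "\<forall>z\<in>(\<lambda>(x, \<theta>). f \<theta> x) ` (XX \<times> TT). norm z \<le> B"
    using compact_imp_bounded bounded_iff by metis
  show ?thesis
    by (rule exI[of _ "max 1 B"]) (use B in force)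
qed

lemma unif_f: "\<eta> > 0 \<Longrightarrow> \<exists>\<rho>>0. \<forall>\<theta>\<in>TT. \<forall>y\<in>XX. \<forall>y'\<in>XX. dist y y' < \<rho> \<longrightarrow> norm (f \<theta> y - f \<theta> y') \<le> \<eta>"
proof -
  assume e: "\<eta> > 0"
  obtain d where d: "d > 0" and H: "\<And>y y' t t'. y \<in> XX \<Longrightarrow> y' \<in> XX \<Longrightarrow> t \<in> TT \<Longrightarrow> t' \<in> TT \<Longrightarrow> dist y y' < d \<Longrightarrow> dist t t' < d \<Longrightarrow> dist (f t y) (f t' y') < \<eta>"
    using unif_cont_pair[of XX TT "\<lambda>x t. f t x", OF f_cont X_compact T_compact e] by metis
  show ?thesis
    by (rule exI[of _ d]) (use d H in \<open>force simp: dist_norm\<close>)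
qed

lemma Pn_nonneg: "0 \<le> Pn n v" unfolding Pn_def by (simp add: sum_nonneg)

lemma Pn_lower:
  obtains l0 where "l0 > 0" "\<And>n v. n \<ge> n_st \<Longrightarrow> l0 * (norm v)^2 \<le> Pn n v"
    "\<And>n v. n \<ge> n_st \<Longrightarrow> l0 * (norm v)^2 \<le> (\<Sum>i=1..n_st. (v \<bullet> f (th n) (xs i))^2)"
proof -
  obtain l0 where l0: "l0 > 0" "\<And>\<theta> v. \<theta> \<in> TT \<Longrightarrow> l0 * (norm v)^2 \<le> (\<Sum>i=1..n_st. (v \<bullet> f \<theta> (xs i))^2)"
    using lam0 by blast
  show ?thesis
  proof (rule that[OF l0(1)])
    fix n v assume n: "n \<ge> n_st"
    show "l0 * (norm v)^2 \<le> (\<Sum>i=1..n_st. (v \<bullet> f (th n) (xs i))^2)" using l0(2)[OF th_in[OF n]] .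
    also have "\<dots> = (\<Sum>i=1..n_st. (v \<bullet> f (th n) (x i))^2)"
      by (intro sum.cong) (auto simp: init_x)
    also have "\<dots> \<le> Pn n v" unfolding Pn_def
      by (rule sum_mono2) (use n in auto)
    finally show "l0 * (norm v)^2 \<le> Pn n v" .
  qed
qed

lemma qf_Mn: "n \<ge> n_st \<Longrightarrow> w \<bullet> (Mn n *v b) = (\<Sum>i=1..n. (w \<bullet> f (th n) (x i)) * (b \<bullet> f (th n) (x i))) / real n"
  unfolding Mn_def using nst_pos by (intro qf_emp) auto

lemma Mn_pd: assumes n: "n \<ge> n_st" shows "v \<noteq> 0 \<Longrightarrow> 0 < v \<bullet> (Mn n *v v)"
proof -
  assume v: "v \<noteq> 0"
  obtain l0 where l0: "l0 > 0" "\<And>n v. n \<ge> n_st \<Longrightarrow> l0 * (norm v)^2 \<le> Pn n v"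
    "\<And>n v. n \<ge> n_st \<Longrightarrow> l0 * (norm v)^2 \<le> (\<Sum>i=1..n_st. (v \<bullet> f (th n) (xs i))^2)" using Pn_lower by metis
  have "0 < l0 * (norm v)^2" using l0 v by simp
  also have "\<dots> \<le> Pn n v" using l0(2)[OF n] .
  finally have "0 < Pn n v / real n" using n nst_pos by (intro divide_pos_pos) auto
  also have "Pn n v / real n = v \<bullet> (Mn n *v v)" unfolding qf_Mn[OF n] Pn_def by (simp only: power2_eq_square)
  finally show ?thesis .
qed

lemma Mn_apply: "n \<ge> n_st \<Longrightarrow> Mn n *v (matrix_inv (Mn n) *v a) = a"
  by (rule pd_inv_apply) (rule Mn_pd)

lemma Dn_eq: assumes n: "n \<ge> n_st" shows "Dn n a = Pn n (matrix_inv (Mn n) *v a) / real n"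
proof -
  let ?b = "matrix_inv (Mn n) *v a"
  have "Dn n a = ?b \<bullet> (Mn n *v ?b)" unfolding Dn_def Mn_apply[OF n] by (simp add: inner_commute)
  also have "\<dots> = Pn n ?b / real n" unfolding qf_Mn[OF n] Pn_def by (simp only: power2_eq_square)
  finally show ?thesis .
qed

lemma Dn_nonneg: "n \<ge> n_st \<Longrightarrow> 0 \<le> Dn n a"
  using Dn_eq Pn_nonneg by simp

lemma CSD: assumes n: "n \<ge> n_st" shows "(v \<bullet> a)^2 \<le> Pn n v * Dn n a / real n"
proof -
  let ?b = "matrix_inv (Mn n) *v a"
  have "v \<bullet> a = v \<bullet> (Mn n *v ?b)" by (simp add: Mn_apply[OF n])
  also have "\<dots> = (\<Sum>i=1..n. (v \<bullet> f (th n) (x i)) * (?b \<bullet> f (th n) (x i))) / real n" by (rule qf_Mn[OF n])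
  finally have "(v \<bullet> a)^2 = (\<Sum>i=1..n. (v \<bullet> f (th n) (x i)) * (?b \<bullet> f (th n) (x i)))^2 / (real n)^2"
    by (simp add: power_divide)
  also have "\<dots> \<le> (Pn n v * Pn n ?b) / (real n)^2" unfolding Pn_def
    by (intro divide_right_mono Cauchy_Schwarz_ineq_sum) simp
  also have "\<dots> = Pn n v * Dn n a / real n" unfolding Dn_eq[OF n] using n nst_pos by (simp add: power2_eq_square)
  finally show ?thesis .
qed

end


context wynn_seq begin

lemma wynn_D: "n \<ge> n_st \<Longrightarrow> y \<in> XX \<Longrightarrow> Dn n (f (th n) y) \<le> Dn n (un n)"
  using wynn unfolding Dn_def Mn_def un_def by blast

lemma L1:
  assumes n: "n \<ge> n_st"
    and l0: "l0 * (norm v)^2 \<le> (\<Sum>k=1..n_st. (v \<bullet> f (th n) (xs k))^2)"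
  shows "l0 * (norm v)^2 * real n \<le> real n_st * Dn n (un n) * Pn n v"
proof -
  have npos: "real n > 0" using n nst_pos by simp
  have "(\<Sum>k=1..n_st. (v \<bullet> f (th n) (xs k))^2) \<le> (\<Sum>k=1..n_st. Pn n v * Dn n (un n) / real n)"
  proof (rule sum_mono)
    fix k assume k: "k \<in> {1..n_st}"
    have "(v \<bullet> f (th n) (xs k))^2 \<le> Pn n v * Dn n (f (th n) (xs k)) / real n" by (rule CSD[OF n])
    also have "\<dots> \<le> Pn n v * Dn n (un n) / real n"
      using wynn_D[OF n, of "xs k"] init_pts k Pn_nonneg npos
      by (intro divide_right_mono mult_left_mono) auto
    finally show "(v \<bullet> f (th n) (xs k))^2 \<le> Pn n v * Dn n (un n) / real n" .
  qed
  also have "\<dots> = real n_st * Pn n v * Dn n (un n) / real n" by simp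
  finally have "l0 * (norm v)^2 \<le> real n_st * Pn n v * Dn n (un n) / real n" using l0 by linarith
  hence "l0 * (norm v)^2 * real n \<le> real n_st * Pn n v * Dn n (un n)" using npos by (simp add: field_simps)
  thus ?thesis by (simp add: mult_ac)
qed

lemma W:
  assumes n: "n \<ge> n_st" and l0: "l0 > 0" "\<And>v. l0 * (norm v)^2 \<le> (\<Sum>k=1..n_st. (v \<bullet> f (th n) (xs k))^2)"
    and eta: "0 \<le> \<eta>" "4 * \<eta>^2 * real n_st \<le> l0"
    and rho: "\<forall>y\<in>XX. \<forall>y'\<in>XX. dist y y' < \<rho> \<longrightarrow> norm (f (th n) y - f (th n) y') \<le> \<eta>"
  shows "real (card {i\<in>{1..n}. dist (x i) (x (Suc n)) < \<rho>}) * Dn n (un n) \<le> 4 * real n"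
proof -
  define u where "u = un n"
  define w where "w = matrix_inv (Mn n) *v u"
  define D where "D = Dn n u"
  have npos: "real n > 0" using n nst_pos by simp
  have nst: "real n_st > 0" using nst_pos by simp
  have Dw: "D = w \<bullet> u" unfolding D_def Dn_def w_def by (simp add: inner_commute)
  have PwD: "Pn n w = real n * D" unfolding D_def w_def Dn_eq[OF n] using npos by simp
  have D0: "0 \<le> D" unfolding D_def by (rule Dn_nonneg[OF n])
  have Dpos: "D > 0"
  proof -
    have "(1::real^'p) \<noteq> 0" by (simp add: vec_eq_iff)
    hence "0 < l0 * (norm (1::real^'p))^2 * real n" using l0 npos by simp
    also have "\<dots> \<le> real n_st * D * Pn n 1" using L1[OF n l0(2)] unfolding D_def u_def .
    finally have "D \<noteq> 0" by auto
    thus ?thesis using D0 by simp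
  qed
  have L1w: "l0 * (norm w)^2 \<le> real n_st * D^2"
  proof -
    have "l0 * (norm w)^2 * real n \<le> real n_st * D * Pn n w" using L1[OF n l0(2)] unfolding D_def u_def .
    also have "\<dots> = (real n_st * D^2) * real n" unfolding PwD by (simp add: power2_eq_square)
    finally show ?thesis using npos by simp
  qed
  have big: "2 * \<eta> * norm w \<le> D"
  proof (rule ccontr)
    assume "\<not> 2 * \<eta> * norm w \<le> D"
    hence lt: "D < 2 * \<eta> * norm w" by simp
    hence "D^2 < (2 * \<eta> * norm w)^2" using D0 by (intro power_strict_mono) auto
    hence "real n_st * D^2 < real n_st * (4 * \<eta>^2 * (norm w)^2)" using nst by (simp add: power_mult_distrib)
    also have "\<dots> = (4 * \<eta>^2 * real n_st) * (norm w)^2" by simp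
    also have "\<dots> \<le> l0 * (norm w)^2" using eta(2) by (intro mult_right_mono) auto
    finally show False using L1w by simp
  qed
  let ?B = "{i\<in>{1..n}. dist (x i) (x (Suc n)) < \<rho>}"
  have xS: "x (Suc n) \<in> XX" using wynn[OF n] by simp
  have each: "D^2 / 4 \<le> (w \<bullet> f (th n) (x i))^2" if i: "i \<in> ?B" for i
  proof -
    have xi: "x i \<in> XX" using i x_in by auto
    have "norm (u - f (th n) (x i)) \<le> \<eta>" unfolding u_def un_def
      using rho xS xi i by (auto simp: dist_commute)
    hence "\<bar>w \<bullet> (u - f (th n) (x i))\<bar> \<le> norm w * \<eta>"
      using Cauchy_Schwarz_ineq2[of w "u - f (th n) (x i)"] norm_ge_zero[of w]
      by (meson mult_left_mono order_trans)
    hence "w \<bullet> f (th n) (x i) \<ge> D - norm w * \<eta>" using Dw by (simp add: inner_diff_right)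
    hence ge: "w \<bullet> f (th n) (x i) \<ge> D / 2" using big by (simp add: mult_ac)
    have "(D / 2)^2 \<le> (w \<bullet> f (th n) (x i))^2" using ge D0 by (intro power_mono) auto
    thus ?thesis by (simp add: power_divide)
  qed
  have "real (card ?B) * (D^2 / 4) = (\<Sum>i\<in>?B. D^2 / 4)" by simp
  also have "\<dots> \<le> (\<Sum>i\<in>?B. (w \<bullet> f (th n) (x i))^2)" by (rule sum_mono) (rule each)
  also have "\<dots> \<le> Pn n w" unfolding Pn_def by (rule sum_mono2) auto
  also have "\<dots> = real n * D" by (rule PwD)
  finally have "real (card ?B) * D * D \<le> 4 * real n * D" by (simp add: power2_eq_square field_simps)
  hence "real (card ?B) * D \<le> 4 * real n" using Dpos by simp
  thus ?thesis unfolding D_def u_def .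
qed

end

context wynn_seq begin

lemma orth_exists:
  fixes Z :: "'x set" and \<theta> :: 't
  assumes Zfin: "finite Z" and Zcard: "card Z < CARD('p)"
  obtains v :: "real^'p" where "norm v = 1" "\<And>z. z \<in> Z \<Longrightarrow> v \<bullet> f \<theta> z = 0"
proof -
  have "dim (f \<theta> ` Z) \<le> card (f \<theta> ` Z)"
    by (rule dim_le_card) (auto intro!: span_base simp: Zfin)
  also have "\<dots> \<le> card Z" by (rule card_image_le[OF Zfin])
  finally have dimlt: "dim (f \<theta> ` Z) < DIM(real^'p)" using Zcard by simp
  obtain v where v: "v \<noteq> 0" "\<And>y. y \<in> span (f \<theta> ` Z) \<Longrightarrow> orthogonal v y"
    using orthogonal_to_subspace_exists[OF dimlt] by blast
  show ?thesis
  proof (rule that[of "v /\<^sub>R norm v"])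
    show "norm (v /\<^sub>R norm v) = 1" using v by simp
    fix z assume "z \<in> Z"
    hence "orthogonal v (f \<theta> z)" using v(2) span_base by blast
    thus "(v /\<^sub>R norm v) \<bullet> f \<theta> z = 0" by (simp add: orthogonal_def)
  qed
qed

lemma fixed_bound:
  fixes g :: "'x \<Rightarrow> real" and Z :: "'x set"
  assumes gc: "continuous_on XX g" and Zfin: "finite Z" and Zcard: "card Z < CARD('p)"
    and Zg: "\<And>y. y \<in> XX \<Longrightarrow> g y = 0 \<Longrightarrow> y \<in> Z" and ZX: "Z \<subseteq> XX"
  shows "\<exists>c>0. \<exists>N. \<forall>n\<ge>N. c \<le> (\<Sum>i=1..n. (g (x i))^2) / real n"
proof -
  obtain l0 where l0: "l0 > 0"
    "\<And>n v. n \<ge> n_st \<Longrightarrow> l0 * (norm v)^2 \<le> (\<Sum>i=1..n_st. (v \<bullet> f (th n) (xs i))^2)"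
    using Pn_lower by metis
  obtain F where F: "F \<ge> 1" "\<And>\<theta> y. \<theta> \<in> TT \<Longrightarrow> y \<in> XX \<Longrightarrow> norm (f \<theta> y) \<le> F" using Fbound by metis
  define P where "P = real CARD('p)"
  have P1: "P \<ge> 1" unfolding P_def by simp
  have nst: "real n_st \<ge> 1" using nst_pos by simp
  define \<eta> where "\<eta> = sqrt (l0 / (32 * real n_st * P))"
  have eta0: "\<eta> > 0" unfolding \<eta>_def using l0 P1 nst by simp
  have eta2: "\<eta>^2 = l0 / (32 * real n_st * P)" unfolding \<eta>_def using l0 P1 nst by simp
  have eta4: "4 * \<eta>^2 * real n_st \<le> l0"
  proof -
    have "4 * \<eta>^2 * real n_st = l0 / (8 * P)" unfolding eta2 using nst by (simp add: field_simps)
    also have "\<dots> \<le> l0" using l0 P1 by (simp add: field_simps)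
    finally show ?thesis .
  qed
  obtain \<rho> where rho: "\<rho> > 0" "\<And>\<theta> y y'. \<theta> \<in> TT \<Longrightarrow> y \<in> XX \<Longrightarrow> y' \<in> XX \<Longrightarrow> dist y y' < \<rho> \<Longrightarrow> norm (f \<theta> y - f \<theta> y') \<le> \<eta>"
    using unif_f[OF eta0] by metis
  define r where "r = \<rho> / 2"
  have r0: "r > 0" unfolding r_def using rho by simp
  define \<beta> where "\<beta> = min (1/4) (l0 / (32 * real n_st * P * F^2))"
  have beta0: "\<beta> > 0" unfolding \<beta>_def using l0 P1 nst F by simp
  define near where "near y = (\<exists>z\<in>Z. dist y z < r)" for y
  define far where "far n = card {i\<in>{1..n}. \<not> near (x i)}" for n
  define cz where "cz z n = card {i\<in>{1..n}. dist (x i) z < r}" for z n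
  have far_mono: "far n \<le> far N" if "n \<le> N" for n N
    unfolding far_def by (rule card_mono) (use that in auto)
  have claim1: "real (cz z n) * l0 \<le> 4 * real n_st * (real n * \<eta>^2 + F^2 * real (far n))"
    if n: "n \<ge> n_st" and z: "z \<in> Z" and xz: "dist (x (Suc n)) z < r" for n z
  proof -
    have npos: "real n > 0" using n nst_pos by simp
    have thn: "th n \<in> TT" by (rule th_in[OF n])
    let ?B = "{i\<in>{1..n}. dist (x i) (x (Suc n)) < \<rho>}"
    have Wn: "real (card ?B) * Dn n (un n) \<le> 4 * real n"
      by (rule W[OF n l0(1) l0(2)[OF n] less_imp_le[OF eta0] eta4]) (use rho(2)[OF thn] in blast)
    have czB: "cz z n \<le> card ?B" unfolding cz_def
    proof (rule card_mono)
      show "{i\<in>{1..n}. dist (x i) z < r} \<subseteq> ?B"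
      proof
        fix i assume i: "i \<in> {i\<in>{1..n}. dist (x i) z < r}"
        have "dist (x i) (x (Suc n)) \<le> dist (x i) z + dist (x (Suc n)) z" by (rule dist_triangle2)
        also have "\<dots> < \<rho>" using i xz unfolding r_def by simp
        finally show "i \<in> ?B" using i by simp
      qed
    qed simp
    have D0: "0 \<le> Dn n (un n)" by (rule Dn_nonneg[OF n])
    have czD: "real (cz z n) * Dn n (un n) \<le> 4 * real n"
    proof -
      have "real (cz z n) * Dn n (un n) \<le> real (card ?B) * Dn n (un n)"
        by (rule mult_right_mono) (use czB D0 in auto)
      thus ?thesis using Wn by linarith
    qed
    obtain v where v: "norm v = 1" "\<And>z. z \<in> Z \<Longrightarrow> v \<bullet> f (th n) z = 0"
      using orth_exists[OF Zfin Zcard] by metis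
    have Pv: "Pn n v \<le> real n * \<eta>^2 + F^2 * real (far n)"
    proof -
      have trm: "(v \<bullet> f (th n) (x i))^2 \<le> (if near (x i) then \<eta>^2 else F^2)" if i: "i \<in> {1..n}" for i
      proof -
        have xi: "x i \<in> XX" using i x_in by auto
        have gen: "(v \<bullet> f (th n) (x i))^2 \<le> (norm (f (th n) (x i)))^2"
        proof -
          have "\<bar>v \<bullet> f (th n) (x i)\<bar> \<le> norm v * norm (f (th n) (x i))" by (rule Cauchy_Schwarz_ineq2)
          thus ?thesis using v(1) by (simp add: abs_le_square_iff[symmetric])
        qed
        show ?thesis
        proof (cases "near (x i)")
          case True
          then obtain z' where z': "z' \<in> Z" "dist (x i) z' < r" unfolding near_def by blast
          have "v \<bullet> f (th n) (x i) = v \<bullet> (f (th n) (x i) - f (th n) z')" using v(2)[OF z'(1)] by (simp add: inner_diff_right)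
          hence "\<bar>v \<bullet> f (th n) (x i)\<bar> \<le> norm v * norm (f (th n) (x i) - f (th n) z')"
            by (metis Cauchy_Schwarz_ineq2)
          also have "\<dots> \<le> \<eta>"
          proof -
            have "dist (x i) z' < \<rho>" using z'(2) zero_le_dist[of "x i" z'] unfolding r_def by linarith
            hence "norm (f (th n) (x i) - f (th n) z') \<le> \<eta>" using rho(2)[OF thn xi] z'(1) ZX by blast
            thus ?thesis using v(1) by simp
          qed
          finally have "\<bar>v \<bullet> f (th n) (x i)\<bar> \<le> \<eta>" .
          hence "(v \<bullet> f (th n) (x i))^2 \<le> \<eta>^2" using eta0 by (simp add: abs_le_square_iff[symmetric])
          thus ?thesis using True by simp
        next
          case False
          have "(norm (f (th n) (x i)))^2 \<le> F^2" using F(2)[OF thn xi] by (intro power_mono) auto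
          thus ?thesis using False gen by simp
        qed
      qed
      have "Pn n v \<le> (\<Sum>i=1..n. if near (x i) then \<eta>^2 else F^2)"
        unfolding Pn_def by (rule sum_mono) (rule trm)
      also have "\<dots> = real (card ({1..n} \<inter> {i. near (x i)})) * \<eta>^2 + real (card ({1..n} \<inter> - {i. near (x i)})) * F^2"
        by (simp add: sum.If_cases)
      also have "card ({1..n} \<inter> - {i. near (x i)}) = far n" unfolding far_def by (intro arg_cong[where f=card]) auto
      also have "real (card ({1..n} \<inter> {i. near (x i)})) \<le> real n"
        using card_mono[of "{1..n}" "{1..n} \<inter> {i. near (x i)}"] by simp
      hence "real (card ({1..n} \<inter> {i. near (x i)})) * \<eta>^2 \<le> real n * \<eta>^2" by (intro mult_right_mono) auto
      finally show ?thesis by (simp add: mult_ac)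
    qed
    have L1v: "l0 * real n \<le> real n_st * Dn n (un n) * Pn n v"
      using L1[OF n l0(2)[OF n], of v] v(1) by simp
    have "real (cz z n) * l0 * real n \<le> real (cz z n) * (real n_st * Dn n (un n) * Pn n v)"
      using L1v by (simp add: mult.assoc mult_left_mono)
    also have "\<dots> = (real (cz z n) * Dn n (un n)) * (real n_st * Pn n v)" by (simp add: mult_ac)
    also have "\<dots> \<le> (4 * real n) * (real n_st * Pn n v)"
      using czD Pn_nonneg[of n v] by (intro mult_right_mono) auto
    finally have "real (cz z n) * l0 \<le> 4 * real n_st * Pn n v" using npos by (simp add: mult_ac)
    also have "\<dots> \<le> 4 * real n_st * (real n * \<eta>^2 + F^2 * real (far n))" using Pv nst by (intro mult_left_mono) auto
    finally show ?thesis .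
  qed
  have claim2: "real (cz z n) \<le> real n_st + real N / (4 * P) + 1"
    if N: "N \<ge> n_st" and farN: "real (far N) \<le> \<beta> * real N" and z: "z \<in> Z" and nN: "n_st \<le> n" "n \<le> N" for N n z
    using nN(1)
  proof (induction n rule: dec_induct)
    case base
    have "cz z n_st \<le> card {1..n_st}" unfolding cz_def by (rule card_mono) auto
    moreover have "0 \<le> real N / (4 * P)" using P1 by simp
    ultimately show ?case by (simp add: of_nat_le_iff[symmetric] del: of_nat_le_iff)
  next
    case (step n)
    have set: "{i\<in>{1..Suc n}. dist (x i) z < r} = {i\<in>{1..n}. dist (x i) z < r} \<union> (if dist (x (Suc n)) z < r then {Suc n} else {})"
      by (auto simp: le_Suc_eq)
    show ?case
    proof (cases "dist (x (Suc n)) z < r")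
      case True
      have c1: "real (cz z n) * l0 \<le> 4 * real n_st * (real n * \<eta>^2 + F^2 * real (far n))"
        by (rule claim1[OF step(1) z True])
      have "4 * real n_st * (real n * \<eta>^2 + F^2 * real (far n)) \<le> 4 * real n_st * (real N * \<eta>^2 + F^2 * (\<beta> * real N))"
      proof -
        have "real n \<le> real N" using step nN by simp
        moreover have "real (far n) \<le> \<beta> * real N" using far_mono[of n N] step nN farN by simp
        ultimately show ?thesis using nst by (intro mult_left_mono add_mono mult_right_mono) auto
      qed
      also have "\<dots> \<le> real N * l0 / (4 * P)"
      proof -
        have "4 * real n_st * (real N * \<eta>^2) = real N * l0 / (8 * P)" unfolding eta2 using nst by (simp add: field_simps)
        moreover have "4 * real n_st * (F^2 * (\<beta> * real N)) \<le> real N * l0 / (8 * P)"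
        proof -
          have "\<beta> \<le> l0 / (32 * real n_st * P * F^2)" unfolding \<beta>_def by simp
          hence "4 * real n_st * F^2 * real N * \<beta> \<le> 4 * real n_st * F^2 * real N * (l0 / (32 * real n_st * P * F^2))"
            using nst by (intro mult_left_mono) auto
          also have "\<dots> = real N * l0 / (8 * P)" using nst F P1 by (simp add: field_simps)
          finally show ?thesis by (simp add: mult_ac)
        qed
        ultimately show ?thesis by (simp add: distrib_left)
      qed
      finally have "real (cz z n) * l0 \<le> real N * l0 / (4 * P)" using c1 by linarith
      hence "real (cz z n) * l0 \<le> (real N / (4 * P)) * l0" by simp
      hence czn: "real (cz z n) \<le> real N / (4 * P)" using l0(1) by (rule mult_right_le_imp_le)
      have "cz z (Suc n) = Suc (cz z n)" unfolding cz_def set using True by simp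
      thus ?thesis using czn nst by simp
    next
      case False
      have "cz z (Suc n) = cz z n" unfolding cz_def set using False by simp
      thus ?thesis using step by simp
    qed
  qed
  have claim3: "real N \<le> (\<Sum>z\<in>Z. real (cz z N)) + real (far N)" for N
  proof -
    have "{1..N} \<subseteq> (\<Union>z\<in>Z. {i\<in>{1..N}. dist (x i) z < r}) \<union> {i\<in>{1..N}. \<not> near (x i)}"
      unfolding near_def by auto
    hence "card {1..N} \<le> card ((\<Union>z\<in>Z. {i\<in>{1..N}. dist (x i) z < r}) \<union> {i\<in>{1..N}. \<not> near (x i)})"
      by (rule card_mono[rotated]) (simp add: Zfin)
    also have "\<dots> \<le> card (\<Union>z\<in>Z. {i\<in>{1..N}. dist (x i) z < r}) + far N"
      unfolding far_def by (rule card_Un_le)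
    also have "card (\<Union>z\<in>Z. {i\<in>{1..N}. dist (x i) z < r}) \<le> (\<Sum>z\<in>Z. cz z N)"
      unfolding cz_def by (rule card_UN_le[OF Zfin])
    finally have "N \<le> (\<Sum>z\<in>Z. cz z N) + far N" by simp
    hence "real N \<le> real ((\<Sum>z\<in>Z. cz z N) + far N)" by (simp only: of_nat_le_iff)
    thus ?thesis by simp
  qed
  define N0 where "N0 = max n_st (2 * CARD('p) * (n_st + 1) + 1)"
  have farbig: "real (far N) > \<beta> * real N" if N: "N \<ge> N0" for N
  proof (rule ccontr)
    assume "\<not> real (far N) > \<beta> * real N"
    hence farN: "real (far N) \<le> \<beta> * real N" by simp
    have NN: "N \<ge> n_st" using N unfolding N0_def by simp
    have c3: "real N \<le> (\<Sum>z\<in>Z. real (cz z N)) + real (far N)" by (rule claim3)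
    have s1: "(\<Sum>z\<in>Z. real (cz z N)) \<le> (\<Sum>z\<in>Z. real n_st + real N / (4 * P) + 1)"
      by (rule sum_mono) (rule claim2[OF NN farN _ NN order_refl])
    have s2: "(\<Sum>z\<in>Z. real n_st + real N / (4 * P) + 1) = real (card Z) * (real n_st + 1) + real (card Z) * (real N / (4 * P))"
      by (simp add: algebra_simps)
    have cZ: "real (card Z) \<le> P" using Zcard unfolding P_def by simp
    have s3: "real (card Z) * (real N / (4 * P)) \<le> real N / 4"
    proof -
      have "real (card Z) * (real N / (4 * P)) \<le> P * (real N / (4 * P))"
        using cZ by (intro mult_right_mono) (use P1 in auto)
      also have "\<dots> = real N / 4" using P1 by simp
      finally show ?thesis .
    qed
    have b4: "\<beta> \<le> 1/4" unfolding \<beta>_def by simp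
    have s4: "real (far N) \<le> real N / 4"
    proof -
      have "\<beta> * real N \<le> (1/4) * real N" using b4 by (intro mult_right_mono) auto
      thus ?thesis using farN by simp
    qed
    have s5: "real (card Z) * (real n_st + 1) \<le> P * (real n_st + 1)"
      using cZ by (intro mult_right_mono) auto
    have "real N \<le> 2 * P * (real n_st + 1)" using c3 s1 s2 s3 s4 s5 by linarith
    moreover have "2 * CARD('p) * (n_st + 1) + 1 \<le> N" using N unfolding N0_def by simp
    hence "real (2 * CARD('p) * (n_st + 1) + 1) \<le> real N" by (simp only: of_nat_le_iff)
    hence "2 * P * (real n_st + 1) + 1 \<le> real N" unfolding P_def by (simp add: algebra_simps)
    ultimately show False by simp
  qed
  define K where "K = {y\<in>XX. \<forall>z\<in>Z. r \<le> dist y z}"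
  obtain \<gamma> where gam: "\<gamma> > 0" "\<And>y. y \<in> K \<Longrightarrow> \<gamma> \<le> (g y)^2"
  proof (cases "K = {}")
    case True thus ?thesis using that[of 1] by simp
  next
    case False
    have "closed (\<Inter>z\<in>Z. {y. r \<le> dist y z})"
      by (intro closed_INT ballI closed_Collect_le continuous_intros)
    hence Keq: "K = XX \<inter> (\<Inter>z\<in>Z. {y. r \<le> dist y z})" unfolding K_def by auto
    have cK: "compact K" unfolding Keq
      by (rule compact_Int_closed[OF X_compact]) (intro closed_INT ballI closed_Collect_le continuous_intros)
    have "continuous_on K (\<lambda>y. (g y)^2)"
      by (rule continuous_on_subset[of XX]) (use gc in \<open>auto intro!: continuous_intros simp: K_def\<close>)
    then obtain y0 where y0: "y0 \<in> K" "\<And>y. y \<in> K \<Longrightarrow> (g y0)^2 \<le> (g y)^2"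
      using continuous_attains_inf[OF cK False] by blast
    have "g y0 \<noteq> 0"
    proof
      assume "g y0 = 0"
      hence "y0 \<in> Z" using Zg y0 unfolding K_def by auto
      thus False using y0(1) r0 unfolding K_def by auto
    qed
    thus ?thesis using that[of "(g y0)^2"] y0 by simp
  qed
  show ?thesis
  proof (intro exI[of _ "\<gamma> * \<beta>"] conjI allI impI exI[of _ N0])
    show "\<gamma> * \<beta> > 0" using gam beta0 by simp
    fix n assume n: "n \<ge> N0"
    have npos: "real n > 0" using n nst_pos unfolding N0_def by simp
    let ?S = "{i\<in>{1..n}. \<not> near (x i)}"
    have "real (far n) * \<gamma> = (\<Sum>i\<in>?S. \<gamma>)" unfolding far_def by simp
    also have "\<dots> \<le> (\<Sum>i\<in>?S. (g (x i))^2)"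
    proof (rule sum_mono)
      fix i assume i: "i \<in> ?S"
      have "x i \<in> K" using i x_in unfolding K_def near_def by (auto simp: not_less)
      thus "\<gamma> \<le> (g (x i))^2" by (rule gam(2))
    qed
    also have "\<dots> \<le> (\<Sum>i=1..n. (g (x i))^2)" by (rule sum_mono2) auto
    finally have A: "real (far n) * \<gamma> \<le> (\<Sum>i=1..n. (g (x i))^2)" .
    have "\<beta> * real n * \<gamma> \<le> real (far n) * \<gamma>" using farbig[OF n] gam by (intro mult_right_mono) auto
    hence "\<gamma> * \<beta> * real n \<le> (\<Sum>i=1..n. (g (x i))^2)" using A by (simp add: mult_ac)
    thus "\<gamma> * \<beta> \<le> (\<Sum>i=1..n. (g (x i))^2) / real n" using npos by (simp add: field_simps)
  qed
qed

end


lemma sq_diff_le: "(a - d)^2 \<le> 2*a^2 + 2*(d::real)^2"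
proof -
  have "0 \<le> (a + d)^2" by simp
  thus ?thesis by (simp add: power2_eq_square algebra_simps)
qed

context wynn_seq begin

lemma zero_set_small:
  fixes \<mu> :: "'x \<Rightarrow> 't \<Rightarrow> real"
  assumes sat_ident: "\<And>z \<theta> \<theta>'. inj z \<Longrightarrow> range z \<subseteq> XX \<Longrightarrow> \<theta> \<in> TT \<Longrightarrow> \<theta>' \<in> TT \<Longrightarrow>
        (\<forall>j::'p. \<mu> (z j) \<theta> = \<mu> (z j) \<theta>') \<Longrightarrow> \<theta> = \<theta>'"
    and t1: "t1 \<in> TT" and t2: "t2 \<in> TT" and ne: "t1 \<noteq> t2"
  shows "finite {y\<in>XX. \<mu> y t1 - \<mu> y t2 = 0} \<and> card {y\<in>XX. \<mu> y t1 - \<mu> y t2 = 0} < CARD('p)"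
proof (rule ccontr)
  let ?Z = "{y\<in>XX. \<mu> y t1 - \<mu> y t2 = 0}"
  assume H: "\<not> (finite ?Z \<and> card ?Z < CARD('p))"
  obtain S where S: "S \<subseteq> ?Z" "finite S" "card S = CARD('p)"
  proof (cases "finite ?Z")
    case True
    hence "CARD('p) \<le> card ?Z" using H by simp
    then obtain S' where "S' \<subseteq> ?Z" "card S' = CARD('p)" "finite S'" by (rule obtain_subset_with_card_n)
    thus ?thesis by (intro that) auto
  next
    case False
    thus ?thesis using infinite_arbitrarily_large[OF False, of "CARD('p)"] that by blast
  qed
  obtain h where h: "bij_betw h (UNIV::'p set) S"
    using finite_same_card_bij[of "UNIV::'p set" S] S by auto
  have "inj h" using h by (simp add: bij_betw_def)
  moreover have "range h \<subseteq> XX" using h S by (auto simp: bij_betw_def)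
  moreover have "\<forall>j::'p. \<mu> (h j) t1 = \<mu> (h j) t2" using h S by (auto simp: bij_betw_def)
  ultimately have "t1 = t2" using sat_ident t1 t2 by blast
  thus False using ne by simp
qed

lemma partA:
  fixes \<mu> :: "'x \<Rightarrow> 't \<Rightarrow> real" and \<theta>bar :: 't
  assumes mu_cont: "continuous_on (XX \<times> TT) (\<lambda>(x, \<theta>). \<mu> x \<theta>)"
    and sat_ident: "\<And>z \<theta> \<theta>'. inj z \<Longrightarrow> range z \<subseteq> XX \<Longrightarrow> \<theta> \<in> TT \<Longrightarrow> \<theta>' \<in> TT \<Longrightarrow>
        (\<forall>j::'p. \<mu> (z j) \<theta> = \<mu> (z j) \<theta>') \<Longrightarrow> \<theta> = \<theta>'"
    and tb: "\<theta>bar \<in> TT" and eps: "\<epsilon> > 0"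
  shows "\<exists>c>0. \<exists>N. \<forall>n\<ge>N. \<forall>\<theta>\<in>TT. \<epsilon> \<le> dist \<theta> \<theta>bar \<longrightarrow> c \<le> (\<Sum>i=1..n. (\<mu> (x i) \<theta> - \<mu> (x i) \<theta>bar)^2) / real n"
proof -
  define Q where "Q n \<theta> = (\<Sum>i=1..n. (\<mu> (x i) \<theta> - \<mu> (x i) \<theta>bar)^2) / real n" for n \<theta>
  have mu_c: "continuous_on XX (\<lambda>y. \<mu> y t)" if t: "t \<in> TT" for t
  proof -
    have "continuous_on XX ((\<lambda>(x, \<theta>). \<mu> x \<theta>) \<circ> (\<lambda>y. (y, t)))"
      by (rule continuous_on_compose[OF _ continuous_on_subset[OF mu_cont]]) (auto intro!: continuous_intros simp: t)
    thus ?thesis by (simp add: o_def)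
  qed
  have pw: "\<exists>c>0. \<exists>N. \<forall>n\<ge>N. c \<le> Q n t" if t: "t \<in> TT" "t \<noteq> \<theta>bar" for t
  proof -
    let ?Z = "{y\<in>XX. \<mu> y t - \<mu> y \<theta>bar = 0}"
    have Zs: "finite ?Z \<and> card ?Z < CARD('p)" by (rule zero_set_small[OF sat_ident t(1) tb t(2)])
    have "\<exists>c>0. \<exists>N. \<forall>n\<ge>N. c \<le> (\<Sum>i=1..n. (\<mu> (x i) t - \<mu> (x i) \<theta>bar)^2) / real n"
      by (rule fixed_bound[where Z="?Z"]) (use Zs mu_c[OF t(1)] mu_c[OF tb] in \<open>auto intro!: continuous_intros\<close>)
    thus ?thesis unfolding Q_def .
  qed
  have loc: "\<exists>c>0. \<exists>N. \<exists>r>0. \<forall>\<theta>\<in>TT. dist \<theta> t < r \<longrightarrow> (\<forall>n\<ge>N. c \<le> Q n \<theta>)" if t: "t \<in> TT" "t \<noteq> \<theta>bar" for t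
  proof -
    obtain c N where c: "c > 0" "\<And>n. n \<ge> N \<Longrightarrow> c \<le> Q n t" using pw[OF t] by blast
    have d0: "sqrt (c/4) > 0" using c by simp
    obtain r where r: "r > 0" "\<And>y y' s s'. y \<in> XX \<Longrightarrow> y' \<in> XX \<Longrightarrow> s \<in> TT \<Longrightarrow> s' \<in> TT \<Longrightarrow> dist y y' < r \<Longrightarrow> dist s s' < r \<Longrightarrow> dist (\<mu> y s) (\<mu> y' s') < sqrt (c/4)"
      using unif_cont_pair[OF mu_cont X_compact T_compact d0] by metis
    have main: "\<forall>\<theta>\<in>TT. dist \<theta> t < r \<longrightarrow> (\<forall>n\<ge>max N 1. c/4 \<le> Q n \<theta>)"
    proof (intro ballI impI allI)
      fix \<theta> n assume th: "\<theta> \<in> TT" and d: "dist \<theta> t < r" and n: "max N 1 \<le> n"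
      have npos: "real n > 0" using n by simp
      have each: "(\<mu> (x i) t - \<mu> (x i) \<theta>bar)^2 / 2 - c/4 \<le> (\<mu> (x i) \<theta> - \<mu> (x i) \<theta>bar)^2" if i: "i \<in> {1..n}" for i
      proof -
        have xi: "x i \<in> XX" using i x_in by auto
        have "\<bar>\<mu> (x i) \<theta> - \<mu> (x i) t\<bar> < sqrt (c/4)" using r(2)[OF xi xi th t(1)] d r(1) by (simp add: dist_real_def)
        hence "\<bar>\<mu> (x i) \<theta> - \<mu> (x i) t\<bar>^2 < (sqrt (c/4))^2" by (intro power_strict_mono) auto
        hence "(\<mu> (x i) \<theta> - \<mu> (x i) t)^2 < c/4" using c by simp
        moreover have "(\<mu> (x i) t - \<mu> (x i) \<theta>bar)^2 \<le> 2 * (\<mu> (x i) \<theta> - \<mu> (x i) \<theta>bar)^2 + 2 * (\<mu> (x i) \<theta> - \<mu> (x i) t)^2"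
          using sq_diff_le[of "\<mu> (x i) \<theta> - \<mu> (x i) \<theta>bar" "\<mu> (x i) \<theta> - \<mu> (x i) t"] by simp
        ultimately show ?thesis by simp
      qed
      have "c * real n / 2 - c/4 * real n \<le> (\<Sum>i=1..n. (\<mu> (x i) t - \<mu> (x i) \<theta>bar)^2) / 2 - c/4 * real n"
      proof -
        have "c \<le> Q n t" using c(2) n by simp
        hence "c * real n \<le> (\<Sum>i=1..n. (\<mu> (x i) t - \<mu> (x i) \<theta>bar)^2)" using npos unfolding Q_def by (simp add: field_simps)
        thus ?thesis by simp
      qed
      also have "\<dots> = (\<Sum>i=1..n. (\<mu> (x i) t - \<mu> (x i) \<theta>bar)^2 / 2 - c/4)"
        by (simp add: sum_subtractf sum_divide_distrib)
      also have "\<dots> \<le> (\<Sum>i=1..n. (\<mu> (x i) \<theta> - \<mu> (x i) \<theta>bar)^2)" by (rule sum_mono) (rule each)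
      finally have "c/4 * real n \<le> (\<Sum>i=1..n. (\<mu> (x i) \<theta> - \<mu> (x i) \<theta>bar)^2)" by simp
      thus "c/4 \<le> Q n \<theta>" unfolding Q_def using npos by (simp add: field_simps)
    qed
    have "c/4 > 0" using c by simp
    thus ?thesis using r(1) main by blast
  qed
  define K where "K = {\<theta>\<in>TT. \<epsilon> \<le> dist \<theta> \<theta>bar}"
  have Kc: "compact K"
  proof -
    have "K = TT \<inter> {\<theta>. \<epsilon> \<le> dist \<theta> \<theta>bar}" unfolding K_def by auto
    moreover have "closed {\<theta>. \<epsilon> \<le> dist \<theta> \<theta>bar}" by (intro closed_Collect_le continuous_intros)
    ultimately show ?thesis using compact_Int_closed[OF T_compact] by simp
  qed
  have "\<forall>t\<in>K. \<exists>cnr. fst cnr > 0 \<and> snd (snd cnr) > 0 \<and> (\<forall>\<theta>\<in>TT. dist \<theta> t < snd (snd cnr) \<longrightarrow> (\<forall>n\<ge>fst (snd cnr). fst cnr \<le> Q n \<theta>))"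
  proof
    fix t assume t: "t \<in> K"
    hence "t \<in> TT" "t \<noteq> \<theta>bar" using eps unfolding K_def by auto
    then obtain c N r where "c > 0" "r > 0" "\<forall>\<theta>\<in>TT. dist \<theta> t < r \<longrightarrow> (\<forall>n\<ge>N. c \<le> Q n \<theta>)"
      using loc by blast
    thus "\<exists>cnr. fst cnr > 0 \<and> snd (snd cnr) > 0 \<and> (\<forall>\<theta>\<in>TT. dist \<theta> t < snd (snd cnr) \<longrightarrow> (\<forall>n\<ge>fst (snd cnr). fst cnr \<le> Q n \<theta>))"
      by (intro exI[of _ "(c, N, r)"]) simp
  qed
  from bchoice[OF this] obtain G where G: "\<forall>t\<in>K. fst (G t) > 0 \<and> snd (snd (G t)) > 0 \<and> (\<forall>\<theta>\<in>TT. dist \<theta> t < snd (snd (G t)) \<longrightarrow> (\<forall>n\<ge>fst (snd (G t)). fst (G t) \<le> Q n \<theta>))"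
    by blast
  define C where "C t = fst (G t)" for t
  define NN where "NN t = fst (snd (G t))" for t
  define R where "R t = snd (snd (G t))" for t
  have CNR: "\<And>t. t \<in> K \<Longrightarrow> C t > 0 \<and> R t > 0 \<and> (\<forall>\<theta>\<in>TT. dist \<theta> t < R t \<longrightarrow> (\<forall>n\<ge>NN t. C t \<le> Q n \<theta>))"
    using G unfolding C_def NN_def R_def by blast
  obtain T where T: "T \<subseteq> K" "finite T" "K \<subseteq> (\<Union>t\<in>T. ball t (R t))"
    by (rule compactE_image[OF Kc, of K "\<lambda>t. ball t (R t)"]) (use CNR in auto)
  show ?thesis
  proof (cases "T = {}")
    case True
    hence "K = {}" using T by auto
    thus ?thesis unfolding K_def Q_def by (intro exI[of _ 1]) auto
  next
    case False
    define c where "c = Min (C ` T)"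
    define N where "N = Max (NN ` T)"
    have c0: "c > 0" unfolding c_def using T False CNR by (subst Min_gr_iff) auto
    show ?thesis
    proof (intro exI[of _ c] exI[of _ N] conjI c0 allI impI ballI)
      fix n \<theta> assume n: "N \<le> n" and th: "\<theta> \<in> TT" and d: "\<epsilon> \<le> dist \<theta> \<theta>bar"
      have "\<theta> \<in> K" using th d unfolding K_def by simp
      then obtain t where t: "t \<in> T" "\<theta> \<in> ball t (R t)" using T by blast
      have tK: "t \<in> K" using t T by auto
      have "NN t \<le> N" unfolding N_def using t T by simp
      hence "C t \<le> Q n \<theta>" using CNR[OF tK] th t n by (auto simp: dist_commute)
      moreover have "c \<le> C t" unfolding c_def using t T by simp
      ultimately show "c \<le> (\<Sum>i=1..n. (\<mu> (x i) \<theta> - \<mu> (x i) \<theta>bar)^2) / real n" unfolding Q_def by simp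
    qed
  qed
qed

end


lemma final_det:
  fixes x :: "nat \<Rightarrow> 'x::metric_space" and \<mu> :: "'x \<Rightarrow> 't::metric_space \<Rightarrow> real"
    and e :: "nat \<Rightarrow> real" and th :: "nat \<Rightarrow> 't"
  assumes pA: "\<And>\<epsilon>. \<epsilon> > 0 \<Longrightarrow> \<exists>c>0. \<exists>N. \<forall>n\<ge>N. \<forall>\<theta>\<in>TT. \<epsilon> \<le> dist \<theta> \<theta>bar \<longrightarrow> c \<le> (\<Sum>i=1..n. (\<mu> (x i) \<theta> - \<mu> (x i) \<theta>bar)^2) / real n"
    and LS: "\<And>n. n \<ge> n_st \<Longrightarrow> th n \<in> TT \<and> (\<Sum>i=1..n. (\<mu> (x i) (th n) - \<mu> (x i) \<theta>bar)^2) \<le> 2 * (\<Sum>i=1..n. e i * (\<mu> (x i) (th n) - \<mu> (x i) \<theta>bar))"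
    and x_in: "\<And>i. 1 \<le> i \<Longrightarrow> x i \<in> XX"
    and net: "\<And>j. \<exists>T. finite T \<and> T \<subseteq> TA \<and> (\<forall>\<theta>\<in>TT. \<exists>t\<in>T. \<forall>y\<in>XX. \<bar>\<mu> y \<theta> - \<mu> y t\<bar> < 1 / real (Suc j))"
    and conv: "\<And>t. t \<in> TA \<Longrightarrow> (\<lambda>n. (\<Sum>i=1..n. e i * (\<mu> (x i) t - \<mu> (x i) \<theta>bar)) / real n) \<longlonglongrightarrow> 0"
    and abs_bd: "eventually (\<lambda>n. (\<Sum>i=1..n. \<bar>e i\<bar>) / real n \<le> A) sequentially"
  shows "th \<longlonglongrightarrow> \<theta>bar"
proof (rule tendstoI)
  fix \<epsilon> :: real assume eps: "\<epsilon> > 0"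
  obtain c N where c: "c > 0" and N: "\<And>n \<theta>. n \<ge> N \<Longrightarrow> \<theta> \<in> TT \<Longrightarrow> \<epsilon> \<le> dist \<theta> \<theta>bar \<Longrightarrow> c \<le> (\<Sum>i=1..n. (\<mu> (x i) \<theta> - \<mu> (x i) \<theta>bar)^2) / real n"
    using pA[OF eps] by blast
  define A' where "A' = max A 1"
  have A'pos: "A' > 0" unfolding A'_def by simp
  obtain j where j: "1 / real (Suc j) * A' \<le> c / 8"
  proof -
    obtain j where "inverse (real (Suc j)) < c / (8 * A')" using reals_Archimedean c A'pos by (metis divide_pos_pos zero_less_numeral mult_pos_pos)
    hence "1 / real (Suc j) * A' \<le> c / 8" using A'pos by (simp add: field_simps)
    thus ?thesis by (rule that)
  qed
  obtain T where T: "finite T" "T \<subseteq> TA" "\<And>\<theta>. \<theta> \<in> TT \<Longrightarrow> \<exists>t\<in>T. \<forall>y\<in>XX. \<bar>\<mu> y \<theta> - \<mu> y t\<bar> < 1 / real (Suc j)"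
    using net[of j] by blast
  have evT: "eventually (\<lambda>n. \<forall>t\<in>T. \<bar>(\<Sum>i=1..n. e i * (\<mu> (x i) t - \<mu> (x i) \<theta>bar)) / real n\<bar> < c / 8) sequentially"
  proof (rule eventually_ball_finite[OF T(1)], rule ballI)
    fix t assume t: "t \<in> T"
    have "(\<lambda>n. (\<Sum>i=1..n. e i * (\<mu> (x i) t - \<mu> (x i) \<theta>bar)) / real n) \<longlonglongrightarrow> 0" using conv T(2) t by blast
    from tendstoD[OF this, of "c/8"] c show "eventually (\<lambda>n. \<bar>(\<Sum>i=1..n. e i * (\<mu> (x i) t - \<mu> (x i) \<theta>bar)) / real n\<bar> < c / 8) sequentially"
      by (simp add: dist_real_def)
  qed
  have evN: "eventually (\<lambda>n. n \<ge> max (max N n_st) 1) sequentially" by (rule eventually_ge_at_top)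
  show "eventually (\<lambda>n. dist (th n) \<theta>bar < \<epsilon>) sequentially"
    using evT evN abs_bd
  proof eventually_elim
    case (elim n)
    have n: "n \<ge> N" "n \<ge> n_st" "n \<ge> 1" using elim(2) by auto
    have npos: "real n > 0" using n by simp
    show "dist (th n) \<theta>bar < \<epsilon>"
    proof (rule ccontr)
      assume "\<not> dist (th n) \<theta>bar < \<epsilon>"
      hence d: "\<epsilon> \<le> dist (th n) \<theta>bar" by simp
      let ?\<theta> = "th n"
      have thT: "?\<theta> \<in> TT" using LS[OF n(2)] by simp
      obtain t where t: "t \<in> T" "\<And>y. y \<in> XX \<Longrightarrow> \<bar>\<mu> y ?\<theta> - \<mu> y t\<bar> < 1 / real (Suc j)"
        using T(3)[OF thT] by blast
      have lowc: "c * real n \<le> (\<Sum>i=1..n. (\<mu> (x i) ?\<theta> - \<mu> (x i) \<theta>bar)^2)"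
        using N[OF n(1) thT d] npos by (simp add: field_simps)
      have split: "(\<Sum>i=1..n. e i * (\<mu> (x i) ?\<theta> - \<mu> (x i) \<theta>bar)) = (\<Sum>i=1..n. e i * (\<mu> (x i) t - \<mu> (x i) \<theta>bar)) + (\<Sum>i=1..n. e i * (\<mu> (x i) ?\<theta> - \<mu> (x i) t))"
        by (simp add: sum.distrib[symmetric] algebra_simps)
      have t1: "(\<Sum>i=1..n. e i * (\<mu> (x i) t - \<mu> (x i) \<theta>bar)) < c / 8 * real n"
        using elim(1) t(1) npos by (auto simp: abs_less_iff field_simps)
      have t2: "(\<Sum>i=1..n. e i * (\<mu> (x i) ?\<theta> - \<mu> (x i) t)) \<le> (\<Sum>i=1..n. \<bar>e i\<bar> * (1 / real (Suc j)))"
      proof (rule sum_mono)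
        fix i assume i: "i \<in> {1..n}"
        have "e i * (\<mu> (x i) ?\<theta> - \<mu> (x i) t) \<le> \<bar>e i\<bar> * \<bar>\<mu> (x i) ?\<theta> - \<mu> (x i) t\<bar>" by (simp add: abs_mult[symmetric])
        also have "\<dots> \<le> \<bar>e i\<bar> * (1 / real (Suc j))" using t(2)[OF x_in] i by (intro mult_left_mono) (auto intro: less_imp_le)
        finally show "e i * (\<mu> (x i) ?\<theta> - \<mu> (x i) t) \<le> \<bar>e i\<bar> * (1 / real (Suc j))" .
      qed
      have "(\<Sum>i=1..n. \<bar>e i\<bar> * (1 / real (Suc j))) = (\<Sum>i=1..n. \<bar>e i\<bar>) * (1 / real (Suc j))"
        by (rule sum_distrib_right[symmetric])
      also have "\<dots> \<le> (A' * real n) * (1 / real (Suc j))"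
      proof (rule mult_right_mono)
        have "(\<Sum>i=1..n. \<bar>e i\<bar>) / real n \<le> A'" using elim(3) unfolding A'_def by simp
        thus "(\<Sum>i=1..n. \<bar>e i\<bar>) \<le> A' * real n" using npos by (simp add: field_simps)
      qed simp
      also have "\<dots> = (1 / real (Suc j) * A') * real n" by simp
      also have "\<dots> \<le> c / 8 * real n" by (rule mult_right_mono[OF j]) simp
      finally have t3: "(\<Sum>i=1..n. e i * (\<mu> (x i) ?\<theta> - \<mu> (x i) t)) \<le> c / 8 * real n" using t2 by linarith
      have c8: "c / 8 * real n = (c * real n) / 8" by simp
      define S2 where "S2 = (\<Sum>i=1..n. (\<mu> (x i) ?\<theta> - \<mu> (x i) \<theta>bar)^2)"
      define S1 where "S1 = (\<Sum>i=1..n. e i * (\<mu> (x i) ?\<theta> - \<mu> (x i) \<theta>bar))"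
      define Sa where "Sa = (\<Sum>i=1..n. e i * (\<mu> (x i) t - \<mu> (x i) \<theta>bar))"
      define Sb where "Sb = (\<Sum>i=1..n. e i * (\<mu> (x i) ?\<theta> - \<mu> (x i) t))"
      define cn where "cn = c * real n"
      have h1: "cn \<le> S2" using lowc unfolding cn_def S2_def .
      have h2: "S2 \<le> 2 * S1" using conjunct2[OF LS[OF n(2)]] unfolding S2_def S1_def .
      have h3: "S1 = Sa + Sb" using split unfolding S1_def Sa_def Sb_def .
      have h4: "Sa < cn / 8" using t1 unfolding Sa_def cn_def by simp
      have h5: "Sb \<le> cn / 8" using t3 unfolding Sb_def cn_def by simp
      have "cn < 0" using h1 h2 h3 h4 h5 by linarith
      moreover have "cn > 0" unfolding cn_def using c npos by simp
      ultimately show False by linarith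
    qed
  qed
qed


lemma meas_comp_cont:
  assumes h: "continuous_on S h" and Xf: "Xf \<in> measurable N borel" and XS: "\<And>\<omega>. \<omega> \<in> space N \<Longrightarrow> Xf \<omega> \<in> S"
  shows "(\<lambda>\<omega>. h (Xf \<omega>)) \<in> borel_measurable N"
proof -
  have "Xf \<in> measurable N (restrict_space borel S)"
    by (rule measurable_restrict_space2) (use XS Xf in auto)
  moreover have "h \<in> borel_measurable (restrict_space borel S)"
    by (rule borel_measurable_continuous_on_restrict[OF h])
  ultimately show ?thesis using measurable_comp[of Xf N "restrict_space borel S" h borel] by (simp add: o_def)
qed

lemma partB_g:
  fixes M :: "'a measure" and F :: "nat \<Rightarrow> 'a measure" and e g :: "nat \<Rightarrow> 'a \<Rightarrow> real"
  assumes prob: "prob_space M"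
    and F_sub: "\<And>n. subalgebra M (F n)"
    and F_mono: "\<And>n. sets (F n) \<subseteq> sets (F (Suc n))"
    and e_F: "\<And>i. 1 \<le> i \<Longrightarrow> e i \<in> borel_measurable (F i)"
    and g_F: "\<And>i. 1 \<le> i \<Longrightarrow> g i \<in> borel_measurable (F (i - 1))"
    and g_bd: "\<And>i \<omega>. \<bar>g i \<omega>\<bar> \<le> G"
    and e_sq: "\<And>i. 1 \<le> i \<Longrightarrow> integrable M (\<lambda>\<omega>. (e i \<omega>)\<^sup>2)"
    and e_mean: "\<And>i. 1 \<le> i \<Longrightarrow> AE \<omega> in M. real_cond_exp M (F (i - 1)) (e i) \<omega> = 0"
    and e_var: "AE \<omega> in M. \<exists>B. \<forall>i\<ge>1. real_cond_exp M (F (i - 1)) (\<lambda>\<omega>. (e i \<omega>)\<^sup>2) \<omega> \<le> B"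
  shows "AE \<omega> in M. (\<lambda>n. (\<Sum>i=1..n. e i \<omega> * g i \<omega>) / real n) \<longlonglongrightarrow> 0"
proof (rule mslln[where F=F, OF prob F_sub F_mono])
  interpret prob_space M by (rule prob)
  have sfs: "sigma_finite_subalgebra M (F k)" for k by (rule sfs_of[OF prob F_sub])
  have eM: "e i \<in> borel_measurable M" if "1 \<le> i" for i using measurable_from_subalg[OF F_sub e_F[OF that]] .
  have gM: "g i \<in> borel_measurable M" if "1 \<le> i" for i using measurable_from_subalg[OF F_sub g_F[OF that]] .
  have gFi: "g i \<in> borel_measurable (F i)" if "1 \<le> i" for i
    by (rule filt_lift[where F=F and a="i-1", OF F_sub F_mono _ g_F[OF that]]) simp
  have eint: "integrable M (e i)" if "1 \<le> i" for i
    by (rule square_integrable_imp_integrable[OF eM[OF that] e_sq[OF that]])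
  have G0: "0 \<le> G" using g_bd[of 0 undefined] by simp
  show "(\<lambda>\<omega>. e i \<omega> * g i \<omega>) \<in> borel_measurable (F i)" if i: "1 \<le> i" for i
    using e_F[OF i] gFi[OF i] by measurable
  have sqint: "integrable M (\<lambda>\<omega>. (e i \<omega> * g i \<omega>)^2)" if i: "1 \<le> i" for i
  proof (rule Bochner_Integration.integrable_bound)
    show "integrable M (\<lambda>\<omega>. G^2 * (e i \<omega>)^2)" using e_sq[OF i] by simp
    show "(\<lambda>\<omega>. (e i \<omega> * g i \<omega>)^2) \<in> borel_measurable M" using eM[OF i] gM[OF i] by measurable
    show "AE \<omega> in M. norm ((e i \<omega> * g i \<omega>)^2) \<le> norm (G^2 * (e i \<omega>)^2)"
    proof (rule AE_I2)
      fix \<omega>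
      have "(g i \<omega>)^2 \<le> G^2" using g_bd[of i \<omega>] G0 by (simp add: abs_le_square_iff[symmetric])
      hence "(e i \<omega>)^2 * (g i \<omega>)^2 \<le> (e i \<omega>)^2 * G^2" by (intro mult_left_mono) auto
      thus "norm ((e i \<omega> * g i \<omega>)^2) \<le> norm (G^2 * (e i \<omega>)^2)" by (simp add: power_mult_distrib mult_ac)
    qed
  qed
  show "integrable M (\<lambda>\<omega>. (e i \<omega> * g i \<omega>)^2)" if "1 \<le> i" for i using sqint[OF that] .
  show "AE \<omega> in M. real_cond_exp M (F (i - 1)) (\<lambda>\<omega>. e i \<omega> * g i \<omega>) \<omega> = 0" if i: "1 \<le> i" for i
  proof -
    have int: "integrable M (\<lambda>\<omega>. g i \<omega> * e i \<omega>)"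
    proof (rule Bochner_Integration.integrable_bound)
      show "integrable M (\<lambda>\<omega>. G * e i \<omega>)" using eint[OF i] by simp
      show "(\<lambda>\<omega>. g i \<omega> * e i \<omega>) \<in> borel_measurable M" using eM[OF i] gM[OF i] by measurable
      show "AE \<omega> in M. norm (g i \<omega> * e i \<omega>) \<le> norm (G * e i \<omega>)"
        using g_bd G0 by (intro AE_I2) (simp add: abs_mult mult_right_mono)
    qed
    have eq: "(\<lambda>\<omega>. e i \<omega> * g i \<omega>) = (\<lambda>\<omega>. g i \<omega> * e i \<omega>)" by (simp add: mult.commute)
    have "AE \<omega> in M. real_cond_exp M (F (i - 1)) (\<lambda>\<omega>. g i \<omega> * e i \<omega>) \<omega> = g i \<omega> * real_cond_exp M (F (i - 1)) (e i) \<omega>"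
      by (rule sigma_finite_subalgebra.real_cond_exp_mult[OF sfs g_F[OF i] eM[OF i] int])
    with e_mean[OF i] show ?thesis unfolding eq by eventually_elim simp
  qed
  show "AE \<omega> in M. \<exists>B. \<forall>i\<ge>1. real_cond_exp M (F (i - 1)) (\<lambda>\<omega>. (e i \<omega> * g i \<omega>)^2) \<omega> \<le> B"
  proof -
    have A1: "AE \<omega> in M. \<forall>i. 1 \<le> i \<longrightarrow> real_cond_exp M (F (i - 1)) (\<lambda>\<omega>. (e i \<omega> * g i \<omega>)^2) \<omega> = (g i \<omega>)^2 * real_cond_exp M (F (i - 1)) (\<lambda>\<omega>. (e i \<omega>)^2) \<omega>"
    proof (subst AE_all_countable, intro allI)
      fix i show "AE \<omega> in M. 1 \<le> i \<longrightarrow> real_cond_exp M (F (i - 1)) (\<lambda>\<omega>. (e i \<omega> * g i \<omega>)^2) \<omega> = (g i \<omega>)^2 * real_cond_exp M (F (i - 1)) (\<lambda>\<omega>. (e i \<omega>)^2) \<omega>"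
      proof (cases "1 \<le> i")
        case False thus ?thesis by simp
      next
        case i: True
        have eq: "(\<lambda>\<omega>. (e i \<omega> * g i \<omega>)^2) = (\<lambda>\<omega>. (g i \<omega>)^2 * (e i \<omega>)^2)" by (simp add: power_mult_distrib mult.commute)
        have int: "integrable M (\<lambda>\<omega>. (g i \<omega>)^2 * (e i \<omega>)^2)" using sqint[OF i] unfolding eq .
        have "AE \<omega> in M. real_cond_exp M (F (i - 1)) (\<lambda>\<omega>. (g i \<omega>)^2 * (e i \<omega>)^2) \<omega> = (g i \<omega>)^2 * real_cond_exp M (F (i - 1)) (\<lambda>\<omega>. (e i \<omega>)^2) \<omega>"
        proof -
          have m1: "(\<lambda>\<omega>. (g i \<omega>)^2) \<in> borel_measurable (F (i-1))" using g_F[OF i] by measurable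
          have m2: "(\<lambda>\<omega>. (e i \<omega>)^2) \<in> borel_measurable M" using eM[OF i] by measurable
          show ?thesis by (rule sigma_finite_subalgebra.real_cond_exp_mult[OF sfs m1 m2 int])
        qed
        thus ?thesis unfolding eq by simp
      qed
    qed
    have A2: "AE \<omega> in M. \<forall>i. 1 \<le> i \<longrightarrow> 0 \<le> real_cond_exp M (F (i - 1)) (\<lambda>\<omega>. (e i \<omega>)^2) \<omega>"
    proof (subst AE_all_countable, intro allI)
      fix i show "AE \<omega> in M. 1 \<le> i \<longrightarrow> 0 \<le> real_cond_exp M (F (i - 1)) (\<lambda>\<omega>. (e i \<omega>)^2) \<omega>"
      proof (cases "1 \<le> i")
        case False thus ?thesis by simp
      next
        case i: True
        have "AE \<omega> in M. 0 \<le> real_cond_exp M (F (i - 1)) (\<lambda>\<omega>. (e i \<omega>)^2) \<omega>"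
          by (rule sigma_finite_subalgebra.real_cond_exp_pos[OF sfs]) (use eM[OF i] in auto)
        thus ?thesis by simp
      qed
    qed
    show ?thesis using A1 A2 e_var
    proof eventually_elim
      case (elim \<omega>)
      then obtain B where B: "\<And>i. 1 \<le> i \<Longrightarrow> real_cond_exp M (F (i - 1)) (\<lambda>\<omega>. (e i \<omega>)^2) \<omega> \<le> B" by auto
      show ?case
      proof (intro exI[of _ "G^2 * B"] allI impI)
        fix i :: nat assume i: "1 \<le> i"
        let ?v = "real_cond_exp M (F (i - 1)) (\<lambda>\<omega>. (e i \<omega>)^2) \<omega>"
        have "(g i \<omega>)^2 \<le> G^2" using g_bd[of i \<omega>] G0 by (simp add: abs_le_square_iff[symmetric])
        hence "(g i \<omega>)^2 * ?v \<le> G^2 * ?v" using elim(2) i by (intro mult_right_mono) auto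
        also have "\<dots> \<le> G^2 * B" using B[OF i] by (intro mult_left_mono) auto
        finally show "real_cond_exp M (F (i - 1)) (\<lambda>\<omega>. (e i \<omega> * g i \<omega>)^2) \<omega> \<le> G^2 * B"
          using elim(1) i by simp
      qed
    qed
  qed
qed


lemma sq_diff_le2: "(a - d)^2 \<le> 2*a^2 + 2*(d::real)^2"
proof -
  have "0 \<le> (a + d)^2" by simp
  thus ?thesis by (simp add: power2_eq_square algebra_simps)
qed

lemma partB_abs:
  fixes M :: "'a measure" and F :: "nat \<Rightarrow> 'a measure" and e :: "nat \<Rightarrow> 'a \<Rightarrow> real"
  assumes prob: "prob_space M"
    and F_sub: "\<And>n. subalgebra M (F n)"
    and F_mono: "\<And>n. sets (F n) \<subseteq> sets (F (Suc n))"
    and e_F: "\<And>i. 1 \<le> i \<Longrightarrow> e i \<in> borel_measurable (F i)"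
    and e_sq: "\<And>i. 1 \<le> i \<Longrightarrow> integrable M (\<lambda>\<omega>. (e i \<omega>)\<^sup>2)"
    and e_var: "AE \<omega> in M. \<exists>B. \<forall>i\<ge>1. real_cond_exp M (F (i - 1)) (\<lambda>\<omega>. (e i \<omega>)\<^sup>2) \<omega> \<le> B"
  shows "AE \<omega> in M. \<exists>A. eventually (\<lambda>n. (\<Sum>i=1..n. \<bar>e i \<omega>\<bar>) / real n \<le> A) sequentially"
proof -
  interpret prob_space M by (rule prob)
  have sfs: "sigma_finite_subalgebra M (F k)" for k by (rule sfs_of[OF prob F_sub])
  have eM: "e i \<in> borel_measurable M" if "1 \<le> i" for i using measurable_from_subalg[OF F_sub e_F[OF that]] .
  have eint: "integrable M (e i)" if "1 \<le> i" for i
    by (rule square_integrable_imp_integrable[OF eM[OF that] e_sq[OF that]])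
  define c where "c i = real_cond_exp M (F (i - 1)) (\<lambda>\<omega>. \<bar>e i \<omega>\<bar>)" for i
  define v where "v i = real_cond_exp M (F (i - 1)) (\<lambda>\<omega>. (e i \<omega>)^2)" for i
  have cF: "c i \<in> borel_measurable (F (i - 1))" for i unfolding c_def by simp
  have cM: "c i \<in> borel_measurable M" for i unfolding c_def by simp
  have cFi: "c i \<in> borel_measurable (F i)" for i
    by (rule filt_lift[where F=F and a="i-1", OF F_sub F_mono _ cF]) simp
  have absint: "integrable M (\<lambda>\<omega>. \<bar>e i \<omega>\<bar>)" if "1 \<le> i" for i using eint[OF that] by simp
  have abssq: "(\<lambda>\<omega>. (\<bar>e i \<omega>\<bar>)^2) = (\<lambda>\<omega>. (e i \<omega>)^2)" for i by simp
  have cint: "integrable M (c i)" if "1 \<le> i" for i unfolding c_def by (rule sigma_finite_subalgebra.real_cond_exp_int(1)[OF sfs absint[OF that]])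
  have csq: "integrable M (\<lambda>\<omega>. (c i \<omega>)^2)" if i: "1 \<le> i" for i
  proof -
    have "integrable M (\<lambda>\<omega>. power2 (real_cond_exp M (F (i - 1)) (\<lambda>\<omega>. \<bar>e i \<omega>\<bar>) \<omega>))"
      by (rule sigma_finite_subalgebra.integrable_convex_cond_exp[OF sfs absint[OF i], where I=UNIV])
         (use e_sq[OF i] convex_power2 in auto)
    thus ?thesis unfolding c_def by simp
  qed
  have jensen: "AE \<omega> in M. (c i \<omega>)^2 \<le> v i \<omega>" if i: "1 \<le> i" for i
  proof -
    have "AE \<omega> in M. power2 (real_cond_exp M (F (i - 1)) (\<lambda>\<omega>. \<bar>e i \<omega>\<bar>) \<omega>) \<le> real_cond_exp M (F (i - 1)) (\<lambda>\<omega>. power2 \<bar>e i \<omega>\<bar>) \<omega>"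
      by (rule sigma_finite_subalgebra.real_cond_exp_jensens_inequality(2)[OF sfs absint[OF i], where I=UNIV])
         (use e_sq[OF i] convex_power2 in auto)
    thus ?thesis unfolding c_def v_def by simp
  qed
  define d where "d i \<omega> = \<bar>e i \<omega>\<bar> - c i \<omega>" for i \<omega>
  have dsq_le: "(d i \<omega>)^2 \<le> 2 * (e i \<omega>)^2 + 2 * (c i \<omega>)^2" for i \<omega>
    unfolding d_def using sq_diff_le2[of "\<bar>e i \<omega>\<bar>" "c i \<omega>"] by simp
  have dsq: "integrable M (\<lambda>\<omega>. (d i \<omega>)^2)" if i: "1 \<le> i" for i
  proof (rule Bochner_Integration.integrable_bound)
    show "integrable M (\<lambda>\<omega>. 2 * (e i \<omega>)^2 + 2 * (c i \<omega>)^2)" using e_sq[OF i] csq[OF i] by simp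
    show "(\<lambda>\<omega>. (d i \<omega>)^2) \<in> borel_measurable M" unfolding d_def using eM[OF i] cM[of i] by measurable
    show "AE \<omega> in M. norm ((d i \<omega>)^2) \<le> norm (2 * (e i \<omega>)^2 + 2 * (c i \<omega>)^2)"
      using dsq_le by (intro AE_I2) simp
  qed
  have lim: "AE \<omega> in M. (\<lambda>n. (\<Sum>i=1..n. d i \<omega>) / real n) \<longlonglongrightarrow> 0"
  proof (rule mslln[where F=F, OF prob F_sub F_mono])
    show "d i \<in> borel_measurable (F i)" if i: "1 \<le> i" for i unfolding d_def using e_F[OF i] cFi[of i] by measurable
    show "integrable M (\<lambda>\<omega>. (d i \<omega>)^2)" if "1 \<le> i" for i using dsq[OF that] .
    show "AE \<omega> in M. real_cond_exp M (F (i - 1)) (d i) \<omega> = 0" if i: "1 \<le> i" for i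
    proof -
      have "AE \<omega> in M. real_cond_exp M (F (i - 1)) (\<lambda>\<omega>. \<bar>e i \<omega>\<bar> - c i \<omega>) \<omega> = real_cond_exp M (F (i - 1)) (\<lambda>\<omega>. \<bar>e i \<omega>\<bar>) \<omega> - real_cond_exp M (F (i - 1)) (c i) \<omega>"
        by (rule sigma_finite_subalgebra.real_cond_exp_diff[OF sfs absint[OF i] cint[OF i]])
      moreover have "AE \<omega> in M. real_cond_exp M (F (i - 1)) (c i) \<omega> = c i \<omega>"
        by (rule sigma_finite_subalgebra.real_cond_exp_F_meas[OF sfs cint[OF i] cF])
      ultimately show ?thesis unfolding d_def[abs_def] by eventually_elim (simp add: c_def)
    qed
    show "AE \<omega> in M. \<exists>B. \<forall>i\<ge>1. real_cond_exp M (F (i - 1)) (\<lambda>\<omega>. (d i \<omega>)^2) \<omega> \<le> B"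
    proof -
      have A1: "AE \<omega> in M. \<forall>i. 1 \<le> i \<longrightarrow> real_cond_exp M (F (i - 1)) (\<lambda>\<omega>. (d i \<omega>)^2) \<omega> \<le> 4 * v i \<omega>"
      proof (subst AE_all_countable, intro allI)
        fix i show "AE \<omega> in M. 1 \<le> i \<longrightarrow> real_cond_exp M (F (i - 1)) (\<lambda>\<omega>. (d i \<omega>)^2) \<omega> \<le> 4 * v i \<omega>"
        proof (cases "1 \<le> i")
          case False thus ?thesis by simp
        next
          case i: True
          have int2e: "integrable M (\<lambda>\<omega>. 2 * (e i \<omega>)^2)" using e_sq[OF i] by simp
          have int2c: "integrable M (\<lambda>\<omega>. 2 * (c i \<omega>)^2)" using csq[OF i] by simp
          have m2c: "(\<lambda>\<omega>. 2 * (c i \<omega>)^2) \<in> borel_measurable (F (i - 1))" using cF[of i] by measurable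
          have B1: "AE \<omega> in M. real_cond_exp M (F (i - 1)) (\<lambda>\<omega>. (d i \<omega>)^2) \<omega> \<le> real_cond_exp M (F (i - 1)) (\<lambda>\<omega>. 2 * (e i \<omega>)^2 + 2 * (c i \<omega>)^2) \<omega>"
            by (rule sigma_finite_subalgebra.real_cond_exp_mono[OF sfs]) (use dsq_le dsq[OF i] int2e int2c in auto)
          have B2: "AE \<omega> in M. real_cond_exp M (F (i - 1)) (\<lambda>\<omega>. 2 * (e i \<omega>)^2 + 2 * (c i \<omega>)^2) \<omega> = real_cond_exp M (F (i - 1)) (\<lambda>\<omega>. 2 * (e i \<omega>)^2) \<omega> + real_cond_exp M (F (i - 1)) (\<lambda>\<omega>. 2 * (c i \<omega>)^2) \<omega>"
            by (rule sigma_finite_subalgebra.real_cond_exp_add[OF sfs int2e int2c])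
          have B3: "AE \<omega> in M. real_cond_exp M (F (i - 1)) (\<lambda>\<omega>. 2 * (e i \<omega>)^2) \<omega> = 2 * v i \<omega>"
            unfolding v_def by (rule sigma_finite_subalgebra.real_cond_exp_cmult[OF sfs e_sq[OF i]])
          have B4: "AE \<omega> in M. real_cond_exp M (F (i - 1)) (\<lambda>\<omega>. 2 * (c i \<omega>)^2) \<omega> = 2 * (c i \<omega>)^2"
            by (rule sigma_finite_subalgebra.real_cond_exp_F_meas[OF sfs int2c m2c])
          from B1 B2 B3 B4 jensen[OF i] show ?thesis by eventually_elim simp
        qed
      qed
      from A1 e_var show ?thesis
      proof eventually_elim
        case (elim \<omega>)
        then obtain B where B: "\<And>i. 1 \<le> i \<Longrightarrow> v i \<omega> \<le> B" unfolding v_def by auto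
        show ?case
        proof (intro exI[of _ "4 * B"] allI impI)
          fix i :: nat assume i: "1 \<le> i"
          show "real_cond_exp M (F (i - 1)) (\<lambda>\<omega>. (d i \<omega>)^2) \<omega> \<le> 4 * B" using elim(1) B[OF i] i by fastforce
        qed
      qed
    qed
  qed
  have J: "AE \<omega> in M. \<forall>i. 1 \<le> i \<longrightarrow> (c i \<omega>)^2 \<le> v i \<omega>"
    using jensen by (subst AE_all_countable) (auto intro: AE_I2)
  from lim J e_var show ?thesis
  proof eventually_elim
    case (elim \<omega>)
    then obtain B where B: "\<And>i. 1 \<le> i \<Longrightarrow> v i \<omega> \<le> B" unfolding v_def by auto
    have cb: "c i \<omega> \<le> (1 + B) / 2" if i: "1 \<le> i" for i
    proof -
      have "0 \<le> (c i \<omega> - 1)^2" by simp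
      hence "2 * c i \<omega> \<le> 1 + (c i \<omega>)^2" by (simp add: power2_eq_square algebra_simps)
      thus ?thesis using elim(2) B[OF i] i by force
    qed
    have "eventually (\<lambda>n. dist ((\<Sum>i=1..n. d i \<omega>) / real n) 0 < 1) sequentially"
      by (rule tendstoD[OF elim(1)]) simp
    hence ev1: "eventually (\<lambda>n. (\<Sum>i=1..n. d i \<omega>) / real n < 1) sequentially"
      by eventually_elim (unfold dist_real_def diff_zero abs_less_iff, blast)
    show ?case
    proof (intro exI[of _ "1 + (1 + B) / 2"])
      show "eventually (\<lambda>n. (\<Sum>i=1..n. \<bar>e i \<omega>\<bar>) / real n \<le> 1 + (1 + B) / 2) sequentially"
        using ev1 eventually_ge_at_top[of "1::nat"]
      proof eventually_elim
        case (elim n)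
        have npos: "real n > 0" using elim(2) by simp
        have "(\<Sum>i=1..n. \<bar>e i \<omega>\<bar>) = (\<Sum>i=1..n. d i \<omega>) + (\<Sum>i=1..n. c i \<omega>)"
          unfolding d_def by (simp add: sum.distrib[symmetric])
        also have "(\<Sum>i=1..n. c i \<omega>) \<le> (\<Sum>i=1..n. (1 + B) / 2)" by (rule sum_mono) (use cb in auto)
        also have "\<dots> = real n * ((1 + B) / 2)" by simp
        finally have "(\<Sum>i=1..n. \<bar>e i \<omega>\<bar>) \<le> (\<Sum>i=1..n. d i \<omega>) + real n * ((1 + B) / 2)" by simp
        moreover have "(\<Sum>i=1..n. d i \<omega>) < real n" using elim(1) npos by (simp add: field_simps)
        ultimately have "(\<Sum>i=1..n. \<bar>e i \<omega>\<bar>) \<le> real n * (1 + (1 + B) / 2)" by (simp add: algebra_simps)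
        thus ?case using npos by (simp add: field_simps)
      qed
    qed
  qed
qed



theorem theorem3p1:
  fixes \<X> :: "'x::metric_space set" and \<Theta> :: "'t::metric_space set"
    and \<mu> :: "'x \<Rightarrow> 't \<Rightarrow> real"
    and f :: "'t \<Rightarrow> 'x \<Rightarrow> real ^ 'p::finite"
    and M :: "'w measure" and F :: "nat \<Rightarrow> 'w measure"
    and X :: "nat \<Rightarrow> 'w \<Rightarrow> 'x" and Y e :: "nat \<Rightarrow> 'w \<Rightarrow> real"
    and \<theta>bar :: 't and n_st :: nat and xs :: "nat \<Rightarrow> 'x"
    and \<theta>hat \<theta>LS :: "nat \<Rightarrow> 'w \<Rightarrow> 't"
  assumes X_compact: "compact \<X>" and Theta_compact: "compact \<Theta>"
    and mu_cont: "continuous_on (\<X> \<times> \<Theta>) (\<lambda>(x, \<theta>). \<mu> x \<theta>)"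
    and f_span: "\<And>\<theta>. \<theta> \<in> \<Theta> \<Longrightarrow> span (f \<theta> ` \<X>) = UNIV"
    and f_cont: "continuous_on (\<X> \<times> \<Theta>) (\<lambda>(x, \<theta>). f \<theta> x)"
    and sat_ident: "\<And>z \<theta> \<theta>'. inj z \<Longrightarrow> range z \<subseteq> \<X> \<Longrightarrow> \<theta> \<in> \<Theta> \<Longrightarrow> \<theta>' \<in> \<Theta> \<Longrightarrow>
        (\<forall>j::'p. \<mu> (z j) \<theta> = \<mu> (z j) \<theta>') \<Longrightarrow> \<theta> = \<theta>'"
    and prob: "prob_space M"
    and theta_bar: "\<theta>bar \<in> \<Theta>"
    \<comment> \<open>initial design\<close>
    and init_pts: "\<And>i. 1 \<le> i \<Longrightarrow> i \<le> n_st \<Longrightarrow> xs i \<in> \<X>"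
    and init_X: "\<And>i \<omega>. 1 \<le> i \<Longrightarrow> i \<le> n_st \<Longrightarrow> X i \<omega> = xs i"
    and init_pd: "\<And>\<theta>. \<theta> \<in> \<Theta> \<Longrightarrow> pos_def_mat (info_matrix f (emp_design xs n_st) \<theta>)"
    \<comment> \<open>adaptive estimators: Theta-valued measurable functions of the data up to stage n\<close>
    and hat_in: "\<And>n \<omega>. n \<ge> n_st \<Longrightarrow> \<theta>hat n \<omega> \<in> \<Theta>"
    and hat_meas: "\<And>n. n \<ge> n_st \<Longrightarrow> \<theta>hat n \<in> measurable M borel"
    and hat_data: "\<And>n \<omega> \<omega>'. n \<ge> n_st \<Longrightarrow>
        (\<forall>i\<in>{1..n}. X i \<omega> = X i \<omega>' \<and> Y i \<omega> = Y i \<omega>') \<Longrightarrow> \<theta>hat n \<omega> = \<theta>hat n \<omega>'"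
    \<comment> \<open>adaptive Wynn algorithm step\<close>
    and wynn: "\<And>n \<omega>. n \<ge> n_st \<Longrightarrow>
        X (Suc n) \<omega> \<in> \<X> \<and>
        (\<forall>x\<in>\<X>. f (\<theta>hat n \<omega>) x \<bullet> (matrix_inv (info_matrix f (emp_design (\<lambda>i. X i \<omega>) n) (\<theta>hat n \<omega>)) *v f (\<theta>hat n \<omega>) x)
           \<le> f (\<theta>hat n \<omega>) (X (Suc n) \<omega>) \<bullet> (matrix_inv (info_matrix f (emp_design (\<lambda>i. X i \<omega>) n) (\<theta>hat n \<omega>)) *v f (\<theta>hat n \<omega>) (X (Suc n) \<omega>)))"
    \<comment> \<open>(A1) filtration\<close>
    and F_sub: "\<And>n. subalgebra M (F n)"
    and F_mono: "\<And>n. sets (F n) \<subseteq> sets (F (Suc n))"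
    and X_meas: "\<And>i. 1 \<le> i \<Longrightarrow> X i \<in> measurable (F (i - 1)) borel"
    and Y_meas: "\<And>i. 1 \<le> i \<Longrightarrow> Y i \<in> borel_measurable (F i)"
    \<comment> \<open>(A2) martingale difference errors\<close>
    and Y_model: "\<And>i \<omega>. 1 \<le> i \<Longrightarrow> Y i \<omega> = \<mu> (X i \<omega>) \<theta>bar + e i \<omega>"
    and e_meas: "\<And>i. 1 \<le> i \<Longrightarrow> e i \<in> borel_measurable M"
    and e_sq_int: "\<And>i. 1 \<le> i \<Longrightarrow> integrable M (\<lambda>\<omega>. (e i \<omega>)\<^sup>2)"
    and e_cond_mean: "\<And>i. 1 \<le> i \<Longrightarrow> AE \<omega> in M. real_cond_exp M (F (i - 1)) (e i) \<omega> = 0"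
    and e_cond_var: "AE \<omega> in M. bdd_above ((\<lambda>i. real_cond_exp M (F (i - 1)) (\<lambda>\<omega>. (e i \<omega>)\<^sup>2) \<omega>) ` {1..})"
    \<comment> \<open>least squares estimators: Theta-valued measurable functions of the data\<close>
    and LS_in: "\<And>n \<omega>. n \<ge> n_st \<Longrightarrow> \<theta>LS n \<omega> \<in> \<Theta>"
    and LS_meas: "\<And>n. n \<ge> n_st \<Longrightarrow> \<theta>LS n \<in> measurable M borel"
    and LS_data: "\<And>n \<omega> \<omega>'. n \<ge> n_st \<Longrightarrow>
        (\<forall>i\<in>{1..n}. X i \<omega> = X i \<omega>' \<and> Y i \<omega> = Y i \<omega>') \<Longrightarrow> \<theta>LS n \<omega> = \<theta>LS n \<omega>'"
    and LS_min: "\<And>n \<omega> \<theta>. n \<ge> n_st \<Longrightarrow> \<theta> \<in> \<Theta> \<Longrightarrow>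
        (\<Sum>i=1..n. (Y i \<omega> - \<mu> (X i \<omega>) (\<theta>LS n \<omega>))\<^sup>2) \<le> (\<Sum>i=1..n. (Y i \<omega> - \<mu> (X i \<omega>) \<theta>)\<^sup>2)"
  shows "AE \<omega> in M. (\<lambda>n. \<theta>LS n \<omega>) \<longlonglongrightarrow> \<theta>bar"
proof -
  interpret P: prob_space M by (rule prob)
  have T_ne: "\<Theta> \<noteq> {}" using theta_bar by blast
  have X_in: "X i \<omega> \<in> \<X>" if i: "1 \<le> i" for i \<omega>
  proof (cases "i \<le> n_st")
    case True thus ?thesis using init_X init_pts i by simp
  next
    case False
    then obtain n where "i = Suc n" "n \<ge> n_st" by (cases i) auto
    thus ?thesis using wynn by simp
  qed
  have ws: "wynn_seq \<X> \<Theta> f n_st xs (\<lambda>i. X i \<omega>) (\<lambda>n. \<theta>hat n \<omega>)" for \<omega>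
    by (unfold_locales) (use X_compact Theta_compact T_ne f_cont init_pts init_X init_pd hat_in wynn in auto)
  have pA: "\<And>\<epsilon>. \<epsilon> > 0 \<Longrightarrow> \<exists>c>0. \<exists>N. \<forall>n\<ge>N. \<forall>\<theta>\<in>\<Theta>. \<epsilon> \<le> dist \<theta> \<theta>bar \<longrightarrow> c \<le> (\<Sum>i=1..n. (\<mu> (X i \<omega>) \<theta> - \<mu> (X i \<omega>) \<theta>bar)^2) / real n" for \<omega>
    by (rule wynn_seq.partA[OF ws mu_cont sat_ident theta_bar])
  have mu_c: "continuous_on \<X> (\<lambda>y. \<mu> y t)" if t: "t \<in> \<Theta>" for t
  proof -
    have "continuous_on \<X> ((\<lambda>(x, \<theta>). \<mu> x \<theta>) \<circ> (\<lambda>y. (y, t)))"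
      by (rule continuous_on_compose[OF _ continuous_on_subset[OF mu_cont]]) (auto intro!: continuous_intros simp: t)
    thus ?thesis by (simp add: o_def)
  qed
  obtain G where G: "\<And>y t. y \<in> \<X> \<Longrightarrow> t \<in> \<Theta> \<Longrightarrow> \<bar>\<mu> y t\<bar> \<le> G"
  proof -
    have "compact ((\<lambda>(x, \<theta>). \<mu> x \<theta>) ` (\<X> \<times> \<Theta>))"
      by (rule compact_continuous_image[OF mu_cont compact_Times[OF X_compact Theta_compact]])
    then obtain B where B: "\<forall>z\<in>(\<lambda>(x, \<theta>). \<mu> x \<theta>) ` (\<X> \<times> \<Theta>). norm z \<le> B"
      using compact_imp_bounded bounded_iff by metis
    show ?thesis by (rule that[of B]) (use B in force)
  qed
  have e_eq: "e i = (\<lambda>\<omega>. Y i \<omega> - \<mu> (X i \<omega>) \<theta>bar)" if i: "1 \<le> i" for i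
    using Y_model[OF i] by (simp add: fun_eq_iff)
  have muX_F: "(\<lambda>\<omega>. \<mu> (X i \<omega>) t) \<in> borel_measurable (F (i - 1))" if i: "1 \<le> i" and t: "t \<in> \<Theta>" for i t
    by (rule meas_comp_cont[OF mu_c[OF t] X_meas[OF i]]) (rule X_in[OF i])
  have e_F: "e i \<in> borel_measurable (F i)" if i: "1 \<le> i" for i
  proof -
    have "(\<lambda>\<omega>. \<mu> (X i \<omega>) \<theta>bar) \<in> borel_measurable (F i)"
      by (rule filt_lift[where F=F and a="i-1", OF F_sub F_mono _ muX_F[OF i theta_bar]]) simp
    thus ?thesis unfolding e_eq[OF i] using Y_meas[OF i] by measurable
  qed
  have e_var': "AE \<omega> in M. \<exists>B. \<forall>i\<ge>1. real_cond_exp M (F (i - 1)) (\<lambda>\<omega>. (e i \<omega>)\<^sup>2) \<omega> \<le> B"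
    using e_cond_var by eventually_elim (auto simp: bdd_above_def)
  have net_ex: "\<exists>T. finite T \<and> T \<subseteq> \<Theta> \<and> (\<forall>\<theta>\<in>\<Theta>. \<exists>t\<in>T. \<forall>y\<in>\<X>. \<bar>\<mu> y \<theta> - \<mu> y t\<bar> < 1 / real (Suc j))" for j
  proof -
    have e0: "1 / real (Suc j) > 0" by simp
    obtain r where r: "r > 0" "\<And>y y' s s'. y \<in> \<X> \<Longrightarrow> y' \<in> \<X> \<Longrightarrow> s \<in> \<Theta> \<Longrightarrow> s' \<in> \<Theta> \<Longrightarrow> dist y y' < r \<Longrightarrow> dist s s' < r \<Longrightarrow> dist (\<mu> y s) (\<mu> y' s') < 1 / real (Suc j)"
      using unif_cont_pair[OF mu_cont X_compact Theta_compact e0] by metis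
    obtain T where T: "T \<subseteq> \<Theta>" "finite T" "\<Theta> \<subseteq> (\<Union>t\<in>T. ball t r)"
      by (rule compactE_image[OF Theta_compact, of \<Theta> "\<lambda>t. ball t r"]) (use r in auto)
    show ?thesis
    proof (intro exI[of _ T] conjI T(1,2) ballI)
      fix \<theta> assume th: "\<theta> \<in> \<Theta>"
      then obtain t where t: "t \<in> T" "dist t \<theta> < r" using T(3) by auto
      have "\<forall>y\<in>\<X>. \<bar>\<mu> y \<theta> - \<mu> y t\<bar> < 1 / real (Suc j)"
        using r(2)[of _ _ \<theta> t] r(1) t T(1) th by (auto simp: dist_real_def dist_commute)
      thus "\<exists>t\<in>T. \<forall>y\<in>\<X>. \<bar>\<mu> y \<theta> - \<mu> y t\<bar> < 1 / real (Suc j)" using t(1) by blast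
    qed
  qed
  define Tn where "Tn j = (SOME T. finite T \<and> T \<subseteq> \<Theta> \<and> (\<forall>\<theta>\<in>\<Theta>. \<exists>t\<in>T. \<forall>y\<in>\<X>. \<bar>\<mu> y \<theta> - \<mu> y t\<bar> < 1 / real (Suc j)))" for j
  have Tn: "finite (Tn j) \<and> Tn j \<subseteq> \<Theta> \<and> (\<forall>\<theta>\<in>\<Theta>. \<exists>t\<in>Tn j. \<forall>y\<in>\<X>. \<bar>\<mu> y \<theta> - \<mu> y t\<bar> < 1 / real (Suc j))" for j
    unfolding Tn_def by (rule someI_ex[OF net_ex])
  define TA where "TA = (\<Union>j. Tn j)"
  have TA_c: "countable TA" unfolding TA_def using Tn by (auto intro: countable_finite)
  have TA_sub: "TA \<subseteq> \<Theta>" unfolding TA_def using Tn by auto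
  have convt: "AE \<omega> in M. (\<lambda>n. (\<Sum>i=1..n. e i \<omega> * (\<mu> (X i \<omega>) t - \<mu> (X i \<omega>) \<theta>bar)) / real n) \<longlonglongrightarrow> 0"
    if t: "t \<in> \<Theta>" for t
  proof -
    define g where "g i \<omega> = (if 1 \<le> i then \<mu> (X i \<omega>) t - \<mu> (X i \<omega>) \<theta>bar else 0)" for i \<omega>
    have "AE \<omega> in M. (\<lambda>n. (\<Sum>i=1..n. e i \<omega> * g i \<omega>) / real n) \<longlonglongrightarrow> 0"
    proof (rule partB_g[where F=F, OF prob F_sub F_mono e_F])
      show "g i \<in> borel_measurable (F (i - 1))" if i: "1 \<le> i" for i
      proof -
        have "g i = (\<lambda>\<omega>. \<mu> (X i \<omega>) t - \<mu> (X i \<omega>) \<theta>bar)" using i by (simp add: g_def fun_eq_iff)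
        thus ?thesis using muX_F[OF i t] muX_F[OF i theta_bar] by simp
      qed
      show "\<bar>g i \<omega>\<bar> \<le> 2 * G" for i \<omega>
      proof (cases "1 \<le> i")
        case True
        hence "\<bar>\<mu> (X i \<omega>) t\<bar> \<le> G" "\<bar>\<mu> (X i \<omega>) \<theta>bar\<bar> \<le> G" using G X_in t theta_bar by auto
        thus ?thesis using True by (simp add: g_def abs_le_iff)
      next
        case False
        have "\<bar>\<mu> (X 1 \<omega>) t\<bar> \<le> G" using G X_in t by auto
        thus ?thesis using False by (simp add: g_def)
      qed
    qed (use e_sq_int e_cond_mean e_var' in auto)
    moreover have "(\<Sum>i=1..n. e i \<omega> * g i \<omega>) = (\<Sum>i=1..n. e i \<omega> * (\<mu> (X i \<omega>) t - \<mu> (X i \<omega>) \<theta>bar))" for n \<omega>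
      by (intro sum.cong) (auto simp: g_def)
    ultimately show ?thesis by simp
  qed
  have AE1: "AE \<omega> in M. \<forall>t\<in>TA. (\<lambda>n. (\<Sum>i=1..n. e i \<omega> * (\<mu> (X i \<omega>) t - \<mu> (X i \<omega>) \<theta>bar)) / real n) \<longlonglongrightarrow> 0"
    using convt TA_sub by (subst AE_ball_countable[OF TA_c]) auto
  have AE2: "AE \<omega> in M. \<exists>A. eventually (\<lambda>n. (\<Sum>i=1..n. \<bar>e i \<omega>\<bar>) / real n \<le> A) sequentially"
    by (rule partB_abs[where F=F, OF prob F_sub F_mono e_F e_sq_int e_var'])
  from AE1 AE2 show ?thesis
  proof eventually_elim
    case (elim \<omega>)
    obtain A where A: "eventually (\<lambda>n. (\<Sum>i=1..n. \<bar>e i \<omega>\<bar>) / real n \<le> A) sequentially" using elim(2) by blast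
    show "(\<lambda>n. \<theta>LS n \<omega>) \<longlonglongrightarrow> \<theta>bar"
    proof (rule final_det[where x="\<lambda>i. X i \<omega>" and e="\<lambda>i. e i \<omega>" and TT=\<Theta> and XX=\<X> and TA=TA and n_st=n_st and A=A])
      show "\<exists>c>0. \<exists>N. \<forall>n\<ge>N. \<forall>\<theta>\<in>\<Theta>. \<epsilon> \<le> dist \<theta> \<theta>bar \<longrightarrow> c \<le> (\<Sum>i=1..n. (\<mu> (X i \<omega>) \<theta> - \<mu> (X i \<omega>) \<theta>bar)^2) / real n"
        if "\<epsilon> > 0" for \<epsilon> using pA[OF that] .
      show "\<theta>LS n \<omega> \<in> \<Theta> \<and> (\<Sum>i=1..n. (\<mu> (X i \<omega>) (\<theta>LS n \<omega>) - \<mu> (X i \<omega>) \<theta>bar)^2) \<le> 2 * (\<Sum>i=1..n. e i \<omega> * (\<mu> (X i \<omega>) (\<theta>LS n \<omega>) - \<mu> (X i \<omega>) \<theta>bar))"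
        if n: "n \<ge> n_st" for n
      proof
        show "\<theta>LS n \<omega> \<in> \<Theta>" by (rule LS_in[OF n])
        define gg where "gg i = \<mu> (X i \<omega>) (\<theta>LS n \<omega>) - \<mu> (X i \<omega>) \<theta>bar" for i
        have "(\<Sum>i=1..n. (Y i \<omega> - \<mu> (X i \<omega>) (\<theta>LS n \<omega>))\<^sup>2) \<le> (\<Sum>i=1..n. (Y i \<omega> - \<mu> (X i \<omega>) \<theta>bar)\<^sup>2)"
          by (rule LS_min[OF n theta_bar])
        moreover have "(\<Sum>i=1..n. (Y i \<omega> - \<mu> (X i \<omega>) (\<theta>LS n \<omega>))\<^sup>2) = (\<Sum>i=1..n. (e i \<omega>)^2 - 2 * (e i \<omega> * gg i) + (gg i)^2)"
          by (intro sum.cong refl) (simp add: Y_model gg_def power2_eq_square algebra_simps)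
        moreover have "(\<Sum>i=1..n. (Y i \<omega> - \<mu> (X i \<omega>) \<theta>bar)\<^sup>2) = (\<Sum>i=1..n. (e i \<omega>)^2)"
          by (intro sum.cong refl) (simp add: Y_model)
        ultimately have "(\<Sum>i=1..n. (e i \<omega>)^2) - 2 * (\<Sum>i=1..n. e i \<omega> * gg i) + (\<Sum>i=1..n. (gg i)^2) \<le> (\<Sum>i=1..n. (e i \<omega>)^2)"
          by (simp add: sum.distrib sum_subtractf sum_distrib_left)
        thus "(\<Sum>i=1..n. (\<mu> (X i \<omega>) (\<theta>LS n \<omega>) - \<mu> (X i \<omega>) \<theta>bar)^2) \<le> 2 * (\<Sum>i=1..n. e i \<omega> * (\<mu> (X i \<omega>) (\<theta>LS n \<omega>) - \<mu> (X i \<omega>) \<theta>bar))"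
          unfolding gg_def by simp
      qed
      show "X i \<omega> \<in> \<X>" if "1 \<le> i" for i using X_in[OF that] .
      show "\<exists>T. finite T \<and> T \<subseteq> TA \<and> (\<forall>\<theta>\<in>\<Theta>. \<exists>t\<in>T. \<forall>y\<in>\<X>. \<bar>\<mu> y \<theta> - \<mu> y t\<bar> < 1 / real (Suc j))" for j
        using Tn[of j] unfolding TA_def by blast
      show "(\<lambda>n. (\<Sum>i=1..n. e i \<omega> * (\<mu> (X i \<omega>) t - \<mu> (X i \<omega>) \<theta>bar)) / real n) \<longlonglongrightarrow> 0" if "t \<in> TA" for t
        using elim(1) that by blast
      show "eventually (\<lambda>n. (\<Sum>i=1..n. \<bar>e i \<omega>\<bar>) / real n \<le> A) sequentially" by (rule A)
    qed
  qed
qed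

end
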